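(* Let $K\subseteq\mathbb A^n_{\mathtt F_1}$ be a closed subset and $q$ a maximal element of $K$. Then $[\mathcal Ext^i(k_K,\omega)]_q\cong k$ for $i=d_q$ and $[\mathcal Ext^i(k_K,\omega)]_q=0$ for $i\neq d_q$, where $d_q=\dim U_q$.
   Context: $k$ is a noetherian ring. $\mathbb A^n_{\mathtt F_1}$ is the set of subsets of $\{1,\dots,n\}$ ordered by inclusion with the topology of up-closed sets; $\mathbf 1=\{1,\dots,n\}$; $U_q=\{r\supseteq q\}$, $d_q=\dim U_q=n-|q|$. $k_K$ is the constant sheaf $k$ supported on $K$; $\omega=k_{\{\mathbf 1\}}$; $\mathcal Ext$ is computed in sheaves of $k$-modules on $\mathbb A^n_{\mathtt F_1}$. *)

theory Defs
  imports Main "HOL-Library.Function_Algebras"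
begin

definition is_ideal :: "'k::comm_ring_1 set \<Rightarrow> bool" where
  "is_ideal I \<longleftrightarrow> 0 \<in> I \<and> (\<forall>x\<in>I. \<forall>y\<in>I. x + y \<in> I) \<and> (\<forall>a. \<forall>x\<in>I. a * x \<in> I)"

definition noetherian_ring :: "'k::comm_ring_1 itself \<Rightarrow> bool" where
  "noetherian_ring _ \<longleftrightarrow>
     (\<forall>I :: 'k set. is_ideal I \<longrightarrow>
        (\<exists>S. finite S \<and> I = {\<Sum>s\<in>S. c s * s | c. True}))"

section \<open>The space A^n_F1 (subsets of {1..n}, opens = up-closed sets)\<close>

definition AF1 :: "nat \<Rightarrow> nat set set" where
  "AF1 n = Pow {1..n}"

definition open_AF1 :: "nat \<Rightarrow> nat set set \<Rightarrow> bool" where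
  "open_AF1 n U \<longleftrightarrow> U \<subseteq> AF1 n \<and> (\<forall>p\<in>U. \<forall>r\<in>AF1 n. p \<subseteq> r \<longrightarrow> r \<in> U)"

definition closed_AF1 :: "nat \<Rightarrow> nat set set \<Rightarrow> bool" where
  "closed_AF1 n K \<longleftrightarrow> K \<subseteq> AF1 n \<and> open_AF1 n (AF1 n - K)"

definition Uq :: "nat \<Rightarrow> nat set \<Rightarrow> nat set set" where
  "Uq n q = {r \<in> AF1 n. q \<subseteq> r}"

definition dq :: "nat \<Rightarrow> nat set \<Rightarrow> nat" where
  "dq n q = n - card q"

section \<open>k-modules (inside the ambient k-module nat => k)\<close>

type_synonym 'k vec = "nat \<Rightarrow> 'k"

definition smul :: "'k::comm_ring_1 \<Rightarrow> 'k vec \<Rightarrow> 'k vec" where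
  "smul c x = (\<lambda>j. c * x j)"

definition submod :: "'k::comm_ring_1 vec set \<Rightarrow> bool" where
  "submod M \<longleftrightarrow> 0 \<in> M \<and> (\<forall>x\<in>M. \<forall>y\<in>M. x + y \<in> M) \<and> (\<forall>c. \<forall>x\<in>M. smul c x \<in> M)"

definition linmap :: "'k::comm_ring_1 vec set \<Rightarrow> 'k vec set \<Rightarrow> ('k vec \<Rightarrow> 'k vec) \<Rightarrow> bool" where
  "linmap M N f \<longleftrightarrow> (\<forall>x\<in>M. f x \<in> N) \<and> (\<forall>x\<in>M. \<forall>y\<in>M. f (x + y) = f x + f y)
      \<and> (\<forall>c. \<forall>x\<in>M. f (smul c x) = smul c (f x))"

text \<open>The free k-module of rank one, k = k * e_0.\<close>
definition kline :: "'k::comm_ring_1 vec set" where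
  "kline = {x. \<forall>j. j \<noteq> 0 \<longrightarrow> x j = 0}"

text \<open>On the finite (Alexandrov) space, a sheaf F on an open set Q is the same as
  its stalks F_r = F(U_r) (r in Q) together with the restriction maps
  F(U_q) -> F(U_r) for q \<subseteq> r (i.e. U_r \<subseteq> U_q), satisfying functoriality.\<close>

definition is_sheaf :: "nat set set \<Rightarrow> (nat set \<Rightarrow> 'k::comm_ring_1 vec set)
    \<Rightarrow> (nat set \<Rightarrow> nat set \<Rightarrow> 'k vec \<Rightarrow> 'k vec) \<Rightarrow> bool" where
  "is_sheaf Q M \<rho> \<longleftrightarrow>
     (\<forall>q\<in>Q. submod (M q)) \<and>
     (\<forall>q\<in>Q. \<forall>r\<in>Q. q \<subseteq> r \<longrightarrow> linmap (M q) (M r) (\<rho> q r)) \<and>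
     (\<forall>q\<in>Q. \<forall>x\<in>M q. \<rho> q q x = x) \<and>
     (\<forall>p\<in>Q. \<forall>q\<in>Q. \<forall>r\<in>Q. p \<subseteq> q \<longrightarrow> q \<subseteq> r \<longrightarrow> (\<forall>x\<in>M p. \<rho> q r (\<rho> p q x) = \<rho> p r x))"

text \<open>Morphisms of sheaves (families of stalk maps commuting with restrictions);
  normalised to be 0 outside their domain so that Hom-sets are honest sets.\<close>
definition sheaf_hom :: "nat set set \<Rightarrow> (nat set \<Rightarrow> 'k::comm_ring_1 vec set)
    \<Rightarrow> (nat set \<Rightarrow> nat set \<Rightarrow> 'k vec \<Rightarrow> 'k vec)
    \<Rightarrow> (nat set \<Rightarrow> 'k vec set) \<Rightarrow> (nat set \<Rightarrow> nat set \<Rightarrow> 'k vec \<Rightarrow> 'k vec)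
    \<Rightarrow> (nat set \<Rightarrow> 'k vec \<Rightarrow> 'k vec) \<Rightarrow> bool" where
  "sheaf_hom Q M \<rho> N \<sigma> \<phi> \<longleftrightarrow>
     (\<forall>q\<in>Q. linmap (M q) (N q) (\<phi> q)) \<and>
     (\<forall>q\<in>Q. \<forall>r\<in>Q. q \<subseteq> r \<longrightarrow> (\<forall>x\<in>M q. \<phi> r (\<rho> q r x) = \<sigma> q r (\<phi> q x))) \<and>
     (\<forall>q x. q \<notin> Q \<or> x \<notin> M q \<longrightarrow> \<phi> q x = 0)"

definition fin_gen :: "nat set set \<Rightarrow> (nat set \<Rightarrow> 'k::comm_ring_1 vec set)
    \<Rightarrow> (nat set \<Rightarrow> nat set \<Rightarrow> 'k vec \<Rightarrow> 'k vec) \<Rightarrow> bool" where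
  "fin_gen Q M \<rho> \<longleftrightarrow>
     (\<exists>S. finite S \<and> S \<subseteq> Sigma Q M \<and>
        (\<forall>r\<in>Q. \<forall>x\<in>M r. \<exists>c. x = (\<Sum>(p,s)\<in>{(p,s)\<in>S. p \<subseteq> r}. smul (c (p,s)) (\<rho> p r s))))"

definition projective :: "nat set set \<Rightarrow> (nat set \<Rightarrow> 'k::comm_ring_1 vec set)
    \<Rightarrow> (nat set \<Rightarrow> nat set \<Rightarrow> 'k vec \<Rightarrow> 'k vec) \<Rightarrow> bool" where
  "projective Q P \<rho> \<longleftrightarrow>
     (\<forall>B \<rho>B C \<rho>C g f. is_sheaf Q B \<rho>B \<longrightarrow> is_sheaf Q C \<rho>C \<longrightarrow>
        sheaf_hom Q B \<rho>B C \<rho>C g \<longrightarrow> (\<forall>q\<in>Q. g q ` B q = C q) \<longrightarrow>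
        sheaf_hom Q P \<rho> C \<rho>C f \<longrightarrow>
        (\<exists>h. sheaf_hom Q P \<rho> B \<rho>B h \<and> (\<forall>q\<in>Q. \<forall>x\<in>P q. g q (h q x) = f q x)))"

definition proj_resolution :: "nat set set
    \<Rightarrow> (nat set \<Rightarrow> 'k::comm_ring_1 vec set) \<Rightarrow> (nat set \<Rightarrow> nat set \<Rightarrow> 'k vec \<Rightarrow> 'k vec)
    \<Rightarrow> (nat \<Rightarrow> nat set \<Rightarrow> 'k vec set) \<Rightarrow> (nat \<Rightarrow> nat set \<Rightarrow> nat set \<Rightarrow> 'k vec \<Rightarrow> 'k vec)
    \<Rightarrow> (nat \<Rightarrow> nat set \<Rightarrow> 'k vec \<Rightarrow> 'k vec) \<Rightarrow> (nat set \<Rightarrow> 'k vec \<Rightarrow> 'k vec) \<Rightarrow> bool" where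
  "proj_resolution Q F \<rho>F P \<rho> d \<epsilon> \<longleftrightarrow>
     (\<forall>j. is_sheaf Q (P j) (\<rho> j) \<and> fin_gen Q (P j) (\<rho> j) \<and> projective Q (P j) (\<rho> j)) \<and>
     (\<forall>j. sheaf_hom Q (P (Suc j)) (\<rho> (Suc j)) (P j) (\<rho> j) (d j)) \<and>
     sheaf_hom Q (P 0) (\<rho> 0) F \<rho>F \<epsilon> \<and>
     (\<forall>r\<in>Q. \<epsilon> r ` P 0 r = F r) \<and>
     (\<forall>r\<in>Q. {x\<in>P 0 r. \<epsilon> r x = 0} = d 0 r ` P 1 r) \<and>
     (\<forall>j. \<forall>r\<in>Q. {x\<in>P (Suc j) r. d j r x = 0} = d (Suc j) r ` P (Suc (Suc j)) r)"

section \<open>Ext via a projective resolution of the first argument\<close>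

type_synonym 'k shom = "nat set \<Rightarrow> 'k vec \<Rightarrow> 'k vec"

definition hsmul :: "'k::comm_ring_1 \<Rightarrow> 'k shom \<Rightarrow> 'k shom" where
  "hsmul c \<phi> = (\<lambda>r x. smul c (\<phi> r x))"

definition cobd :: "nat set set \<Rightarrow> (nat \<Rightarrow> nat set \<Rightarrow> 'k::comm_ring_1 vec set)
    \<Rightarrow> (nat \<Rightarrow> nat set \<Rightarrow> 'k vec \<Rightarrow> 'k vec) \<Rightarrow> nat \<Rightarrow> 'k shom \<Rightarrow> 'k shom" where
  "cobd Q P d j \<phi> = (\<lambda>r x. if r \<in> Q \<and> x \<in> P (Suc j) r then \<phi> r (d j r x) else 0)"

definition cocycles where
  "cocycles Q P \<rho> d G \<rho>G i =
     {\<phi>. sheaf_hom Q (P i) (\<rho> i) G \<rho>G \<phi> \<and> cobd Q P d i \<phi> = 0}"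

definition coboundaries where
  "coboundaries Q P \<rho> d G \<rho>G i =
     (if i = 0 then {0}
      else cobd Q P d (i - 1) ` {\<phi>. sheaf_hom Q (P (i - 1)) (\<rho> (i - 1)) G \<rho>G \<phi>})"

text \<open>H^i(Hom(P_\<bullet>, G)) is isomorphic to k: a k-linear surjection from the
  cocycles onto k whose kernel is the coboundaries.\<close>
definition Ext_iso_k where
  "Ext_iso_k Q P \<rho> d G \<rho>G i \<longleftrightarrow>
     (\<exists>f :: 'k shom \<Rightarrow> 'k::comm_ring_1.
        (\<forall>\<phi>\<in>cocycles Q P \<rho> d G \<rho>G i. \<forall>\<psi>\<in>cocycles Q P \<rho> d G \<rho>G i. f (\<phi> + \<psi>) = f \<phi> + f \<psi>) \<and>
        (\<forall>c. \<forall>\<phi>\<in>cocycles Q P \<rho> d G \<rho>G i. f (hsmul c \<phi>) = c * f \<phi>) \<and>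
        f ` cocycles Q P \<rho> d G \<rho>G i = UNIV \<and>
        {\<phi>\<in>cocycles Q P \<rho> d G \<rho>G i. f \<phi> = 0} = coboundaries Q P \<rho> d G \<rho>G i)"

definition Ext_zero where
  "Ext_zero Q P \<rho> d G \<rho>G i \<longleftrightarrow> cocycles Q P \<rho> d G \<rho>G i = coboundaries Q P \<rho> d G \<rho>G i"

definition kK_stalk :: "nat set set \<Rightarrow> nat set \<Rightarrow> 'k::comm_ring_1 vec set" where
  "kK_stalk K r = (if r \<in> K then kline else {0})"

definition kK_res :: "nat set set \<Rightarrow> nat set \<Rightarrow> nat set \<Rightarrow> 'k::comm_ring_1 vec \<Rightarrow> 'k vec" where
  "kK_res K p r x = (if r \<in> K then x else 0)"

definition omega_stalk :: "nat \<Rightarrow> nat set \<Rightarrow> 'k::comm_ring_1 vec set" where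
  "omega_stalk n r = kK_stalk {{1..n}} r"

definition omega_res :: "nat \<Rightarrow> nat set \<Rightarrow> nat set \<Rightarrow> 'k::comm_ring_1 vec \<Rightarrow> 'k vec" where
  "omega_res n = kK_res {{1..n}}"

end

theory Submission
  imports Defs "HOL-Library.Nat_Bijection"
begin

lemma smul_apply[simp]: "smul c x j = c * x j" by (simp add: smul_def)

lemma submod_0: "submod M \<Longrightarrow> 0 \<in> M" unfolding submod_def by auto
lemma submod_add: "submod M \<Longrightarrow> x \<in> M \<Longrightarrow> y \<in> M \<Longrightarrow> x + y \<in> M" unfolding submod_def by auto
lemma submod_smul: "submod M \<Longrightarrow> x \<in> M \<Longrightarrow> smul c x \<in> M" unfolding submod_def by auto
lemma smul_m1: "smul (-1) x = - x" by (rule ext) simp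
lemma submod_uminus: "submod M \<Longrightarrow> x \<in> M \<Longrightarrow> - x \<in> M"
  using submod_smul[of M x "-1"] by (simp add: smul_m1)
lemma submod_diff: "submod M \<Longrightarrow> x \<in> M \<Longrightarrow> y \<in> M \<Longrightarrow> x - y \<in> M"
  using submod_add[of M x "-y"] submod_uminus[of M y] by simp

lemma linmap_in: "linmap M N f \<Longrightarrow> x \<in> M \<Longrightarrow> f x \<in> N" unfolding linmap_def by auto
lemma linmap_add: "linmap M N f \<Longrightarrow> x \<in> M \<Longrightarrow> y \<in> M \<Longrightarrow> f (x + y) = f x + f y" unfolding linmap_def by auto
lemma linmap_smul: "linmap M N f \<Longrightarrow> x \<in> M \<Longrightarrow> f (smul c x) = smul c (f x)" unfolding linmap_def by auto
lemma linmap_0: "submod M \<Longrightarrow> linmap M N f \<Longrightarrow> f 0 = 0"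
proof -
  assume a: "submod M" "linmap M N f"
  have "f (0 + 0) = f 0 + f 0" using linmap_add[OF a(2) submod_0[OF a(1)] submod_0[OF a(1)]] .
  then have "f 0 = f 0 + f 0" by (metis add.right_neutral)
  then show ?thesis by (metis add_cancel_right_right)
qed
lemma linmap_uminus: "linmap M N f \<Longrightarrow> x \<in> M \<Longrightarrow> f (- x) = - f x"
  using linmap_smul[of M N f x "-1"] by (simp add: smul_m1)
lemma linmap_diff: "submod M \<Longrightarrow> linmap M N f \<Longrightarrow> x \<in> M \<Longrightarrow> y \<in> M \<Longrightarrow> f (x - y) = f x - f y"
  using linmap_add[of M N f x "-y"] linmap_uminus[of M N f y] submod_uminus[of M y] by simp

lemma submod_sum:
  assumes "submod M" "finite I" "\<forall>i\<in>I. v i \<in> M" shows "(\<Sum>i\<in>I. v i) \<in> M"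
  using assms(2,3) by (induction I rule: finite_induct) (auto simp: submod_0[OF assms(1)] submod_add[OF assms(1)])

lemma linmap_sum:
  assumes "submod M" "linmap M N f" "finite I" "\<forall>i\<in>I. v i \<in> M"
  shows "f (\<Sum>i\<in>I. v i) = (\<Sum>i\<in>I. f (v i))"
  using assms(3,4)
proof (induction I rule: finite_induct)
  case empty then show ?case using linmap_0[OF assms(1,2)] by (simp only: sum.empty)
next
  case (insert a I)
  have "f (\<Sum>i\<in>insert a I. v i) = f (v a + (\<Sum>i\<in>I. v i))" by (subst sum.insert[OF insert(1,2)]) (rule refl)
  also have "\<dots> = f (v a) + f (\<Sum>i\<in>I. v i)"
    using linmap_add[OF assms(2)] submod_sum[OF assms(1) insert(1)] insert(4) by blast
  also have "\<dots> = f (v a) + (\<Sum>i\<in>I. f (v i))" using insert(3,4) by simp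
  also have "\<dots> = (\<Sum>i\<in>insert a I. f (v i))" by (subst sum.insert[OF insert(1,2)]) (rule refl)
  finally show ?case .
qed

lemma linmap_mono: "linmap M N f \<Longrightarrow> M' \<subseteq> M \<Longrightarrow> (\<forall>x\<in>M'. f x \<in> N') \<Longrightarrow> linmap M' N' f"
  unfolding linmap_def by blast

lemma is_sheafD:
  assumes "is_sheaf Q M \<rho>"
  shows "q \<in> Q \<Longrightarrow> submod (M q)"
    "q \<in> Q \<Longrightarrow> r \<in> Q \<Longrightarrow> q \<subseteq> r \<Longrightarrow> linmap (M q) (M r) (\<rho> q r)"
  using assms unfolding is_sheaf_def by auto

lemma is_sheafD2:
  assumes "is_sheaf Q M \<rho>"
  shows "q \<in> Q \<Longrightarrow> x \<in> M q \<Longrightarrow> \<rho> q q x = x"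
    "p \<in> Q \<Longrightarrow> q \<in> Q \<Longrightarrow> r \<in> Q \<Longrightarrow> p \<subseteq> q \<Longrightarrow> q \<subseteq> r \<Longrightarrow> x \<in> M p \<Longrightarrow> \<rho> q r (\<rho> p q x) = \<rho> p r x"
  using assms unfolding is_sheaf_def by simp_all

lemma sh_mono: "sheaf_hom Q M \<rho> N \<sigma> \<phi> \<Longrightarrow> (\<forall>q\<in>Q. \<forall>x\<in>M q. \<phi> q x \<in> N' q) \<Longrightarrow> sheaf_hom Q M \<rho> N' \<sigma> \<phi>"
  unfolding sheaf_hom_def linmap_def by simp

lemma projD:
  assumes "projective Q P \<rho>" "is_sheaf Q B \<rho>B" "is_sheaf Q C \<rho>C" "sheaf_hom Q B \<rho>B C \<rho>C g"
    "\<forall>q\<in>Q. g q ` B q = C q" "sheaf_hom Q P \<rho> C \<rho>C f"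
  shows "\<exists>h. sheaf_hom Q P \<rho> B \<rho>B h \<and> (\<forall>q\<in>Q. \<forall>x\<in>P q. g q (h q x) = f q x)"
proof -
  have "\<forall>B \<rho>B C \<rho>C g f. is_sheaf Q B \<rho>B \<longrightarrow> is_sheaf Q C \<rho>C \<longrightarrow>
        sheaf_hom Q B \<rho>B C \<rho>C g \<longrightarrow> (\<forall>q\<in>Q. g q ` B q = C q) \<longrightarrow>
        sheaf_hom Q P \<rho> C \<rho>C f \<longrightarrow>
        (\<exists>h. sheaf_hom Q P \<rho> B \<rho>B h \<and> (\<forall>q\<in>Q. \<forall>x\<in>P q. g q (h q x) = f q x))"
    using assms(1) unfolding projective_def .
  from this[rule_format, OF assms(2-4) _ assms(6)] assms(5) show ?thesis by blast
qed

lemma shD: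
  assumes "sheaf_hom Q M \<rho> N \<sigma> \<phi>"
  shows "q \<in> Q \<Longrightarrow> linmap (M q) (N q) (\<phi> q)"
    "q \<in> Q \<Longrightarrow> r \<in> Q \<Longrightarrow> q \<subseteq> r \<Longrightarrow> x \<in> M q \<Longrightarrow> \<phi> r (\<rho> q r x) = \<sigma> q r (\<phi> q x)"
    "q \<notin> Q \<Longrightarrow> \<phi> q x = 0"
    "x \<notin> M q \<Longrightarrow> \<phi> q x = 0"
  using assms unfolding sheaf_hom_def by auto

lemma sh_in: "sheaf_hom Q M \<rho> N \<sigma> \<phi> \<Longrightarrow> q \<in> Q \<Longrightarrow> x \<in> M q \<Longrightarrow> \<phi> q x \<in> N q"
  using shD(1) linmap_in by metis

lemma sh_comp:
  assumes "sheaf_hom Q M \<rho> N \<sigma> \<psi>" "sheaf_hom Q N \<sigma> L \<tau> \<phi>" "is_sheaf Q N \<sigma>"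
  shows "sheaf_hom Q M \<rho> L \<tau> (\<lambda>r x. \<phi> r (\<psi> r x))"
  unfolding sheaf_hom_def
proof (intro conjI ballI allI impI)
  fix q assume q: "q \<in> Q"
  show "linmap (M q) (L q) (\<lambda>x. \<phi> q (\<psi> q x))"
    using shD(1)[OF assms(1) q] shD(1)[OF assms(2) q] unfolding linmap_def by auto
next
  fix q r x assume "q \<in> Q" "r \<in> Q" "q \<subseteq> r" "x \<in> M q"
  then show "\<phi> r (\<psi> r (\<rho> q r x)) = \<tau> q r (\<phi> q (\<psi> q x))"
    using shD(2)[OF assms(1)] shD(2)[OF assms(2)] sh_in[OF assms(1)] by simp
next
  fix q x assume "q \<notin> Q \<or> x \<notin> M q"
  then show "\<phi> q (\<psi> q x) = 0"
  proof
    assume "q \<notin> Q" then show ?thesis using shD(3)[OF assms(2)] by simp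
  next
    assume x: "x \<notin> M q"
    show ?thesis
    proof (cases "q \<in> Q")
      case True
      then show ?thesis using shD(4)[OF assms(1) x] linmap_0[OF is_sheafD(1)[OF assms(3) True] shD(1)[OF assms(2) True]]
        by simp
    next
      case False then show ?thesis using shD(3)[OF assms(2)] by simp
    qed
  qed
qed

lemma sh_diff:
  assumes "sheaf_hom Q M \<rho> N \<sigma> \<phi>" "sheaf_hom Q M \<rho> N \<sigma> \<psi>" "is_sheaf Q M \<rho>" "is_sheaf Q N \<sigma>"
  shows "sheaf_hom Q M \<rho> N \<sigma> (\<lambda>r x. \<phi> r x - \<psi> r x)"
  unfolding sheaf_hom_def
proof (intro conjI ballI allI impI)
  fix q assume q: "q \<in> Q"
  note l1 = shD(1)[OF assms(1) q] and l2 = shD(1)[OF assms(2) q]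
  note sm = is_sheafD(1)[OF assms(4) q]
  show "linmap (M q) (N q) (\<lambda>x. \<phi> q x - \<psi> q x)"
    unfolding linmap_def
  proof (intro conjI ballI allI)
    fix x assume "x \<in> M q" then show "\<phi> q x - \<psi> q x \<in> N q"
      using linmap_in[OF l1] linmap_in[OF l2] submod_diff[OF sm] by blast
  next
    fix x y assume "x \<in> M q" "y \<in> M q"
    then show "\<phi> q (x + y) - \<psi> q (x + y) = \<phi> q x - \<psi> q x + (\<phi> q y - \<psi> q y)"
      using linmap_add[OF l1] linmap_add[OF l2] by (simp add: algebra_simps)
  next
    fix c x assume "x \<in> M q"
    then show "\<phi> q (smul c x) - \<psi> q (smul c x) = smul c (\<phi> q x - \<psi> q x)"
      using linmap_smul[OF l1] linmap_smul[OF l2] by (auto simp: fun_eq_iff algebra_simps)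
  qed
next
  fix q r x assume a: "q \<in> Q" "r \<in> Q" "q \<subseteq> r" "x \<in> M q"
  then show "\<phi> r (\<rho> q r x) - \<psi> r (\<rho> q r x) = \<sigma> q r (\<phi> q x - \<psi> q x)"
    using shD(2)[OF assms(1) a] shD(2)[OF assms(2) a]
      linmap_diff[OF is_sheafD(1)[OF assms(4) a(1)] is_sheafD(2)[OF assms(4) a(1-3)]]
      sh_in[OF assms(1) a(1,4)] sh_in[OF assms(2) a(1,4)] by simp
next
  fix q x assume "q \<notin> Q \<or> x \<notin> M q"
  then show "\<phi> q x - \<psi> q x = 0" using shD(3,4)[OF assms(1)] shD(3,4)[OF assms(2)] by auto
qed

lemma sh_zero:
  assumes "is_sheaf Q N \<sigma>"
  shows "sheaf_hom Q M \<rho> N \<sigma> (\<lambda>r x. 0)"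
  unfolding sheaf_hom_def linmap_def
proof (intro conjI ballI allI impI)
  fix q r x assume "q \<in> Q" "r \<in> Q" "q \<subseteq> r"
  then show "0 = \<sigma> q r 0" using linmap_0[OF is_sheafD(1)[OF assms] is_sheafD(2)[OF assms]] by metis
qed (auto simp: fun_eq_iff submod_0 is_sheafD[OF assms])

lemma sh_0: "sheaf_hom Q M \<rho> N \<sigma> \<phi> \<Longrightarrow> is_sheaf Q M \<rho> \<Longrightarrow> \<phi> r 0 = 0"
  by (metis is_sheafD(1) linmap_0 shD(1) shD(3))

lemma sh_id:
  assumes "is_sheaf Q M \<rho>"
  shows "sheaf_hom Q M \<rho> M \<rho> (\<lambda>r x. if r \<in> Q \<and> x \<in> M r then x else 0)"
  unfolding sheaf_hom_def linmap_def
proof (intro conjI ballI allI impI)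
  fix q r x assume a: "q \<in> Q" "r \<in> Q" "q \<subseteq> r" "x \<in> M q"
  then show "(if r \<in> Q \<and> \<rho> q r x \<in> M r then \<rho> q r x else 0) = \<rho> q r (if q \<in> Q \<and> x \<in> M q then x else 0)"
    using linmap_in[OF is_sheafD(2)[OF assms a(1-3)] a(4)] by simp
qed (use submod_add[OF is_sheafD(1)[OF assms]] submod_smul[OF is_sheafD(1)[OF assms]] in auto)

lemma lift_im:
  assumes P: "projective Q P \<rho>" and B: "is_sheaf Q B \<rho>B" and C: "is_sheaf Q C \<rho>C"
    and g: "sheaf_hom Q B \<rho>B C \<rho>C g" and f: "sheaf_hom Q P \<rho> C \<rho>C f"
    and im: "\<forall>r\<in>Q. \<forall>x\<in>P r. f r x \<in> g r ` B r"
  shows "\<exists>h. sheaf_hom Q P \<rho> B \<rho>B h \<and> (\<forall>r\<in>Q. \<forall>x\<in>P r. g r (h r x) = f r x)"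
proof -
  define I where "I r = g r ` B r" for r
  have I_sub: "I r \<subseteq> C r" if "r \<in> Q" for r using sh_in[OF g that] by (auto simp: I_def)
  have Ish: "is_sheaf Q I \<rho>C"
    unfolding is_sheaf_def
  proof (intro conjI ballI impI allI)
    fix q assume q: "q \<in> Q"
    note lg = shD(1)[OF g q] and sB = is_sheafD(1)[OF B q]
    show "submod (I q)" unfolding submod_def I_def
    proof (intro conjI ballI allI)
      show "0 \<in> g q ` B q" using linmap_0[OF sB lg] submod_0[OF sB] by force
    next
      fix x y assume "x \<in> g q ` B q" "y \<in> g q ` B q"
      then obtain a b where "a \<in> B q" "b \<in> B q" "x = g q a" "y = g q b" by auto
      then show "x + y \<in> g q ` B q" using linmap_add[OF lg] submod_add[OF sB]
        by (metis image_eqI)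
    next
      fix c x assume "x \<in> g q ` B q"
      then obtain a where "a \<in> B q" "x = g q a" by auto
      then show "smul c x \<in> g q ` B q" using linmap_smul[OF lg] submod_smul[OF sB]
        by (metis image_eqI)
    qed
  next
    fix q r assume qr: "q \<in> Q" "r \<in> Q" "q \<subseteq> r"
    have "linmap (C q) (C r) (\<rho>C q r)" using is_sheafD(2)[OF C qr] .
    moreover have "\<forall>x\<in>I q. \<rho>C q r x \<in> I r"
    proof
      fix x assume "x \<in> I q"
      then obtain a where a: "a \<in> B q" "x = g q a" by (auto simp: I_def)
      then have "\<rho>C q r x = g r (\<rho>B q r a)" using shD(2)[OF g qr] by simp
      moreover have "\<rho>B q r a \<in> B r" using linmap_in[OF is_sheafD(2)[OF B qr] a(1)] .
      ultimately show "\<rho>C q r x \<in> I r" by (auto simp: I_def)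
    qed
    ultimately show "linmap (I q) (I r) (\<rho>C q r)" using linmap_mono I_sub[OF qr(1)] by blast
  next
    fix q x assume "q \<in> Q" "x \<in> I q"
    then show "\<rho>C q q x = x" using is_sheafD2(1)[OF C] I_sub by blast
  next
    fix p q r x assume "p \<in> Q" "q \<in> Q" "r \<in> Q" "p \<subseteq> q" "q \<subseteq> r" "x \<in> I p"
    then show "\<rho>C q r (\<rho>C p q x) = \<rho>C p r x" using is_sheafD2(2)[OF C] I_sub by blast
  qed
  have gI: "sheaf_hom Q B \<rho>B I \<rho>C g"
    by (rule sh_mono[OF g]) (auto simp: I_def)
  have fI: "sheaf_hom Q P \<rho> I \<rho>C f"
    by (rule sh_mono[OF f]) (use im in \<open>auto simp: I_def\<close>)
  have surj: "\<forall>q\<in>Q. g q ` B q = I q" by (simp add: I_def)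
  show ?thesis using projD[OF P B Ish gI surj fI] .
qed

definition cplx :: "nat set set \<Rightarrow> (nat \<Rightarrow> nat set \<Rightarrow> 'k::comm_ring_1 vec set)
   \<Rightarrow> (nat \<Rightarrow> nat set \<Rightarrow> nat set \<Rightarrow> 'k vec \<Rightarrow> 'k vec) \<Rightarrow> (nat \<Rightarrow> 'k shom) \<Rightarrow> bool" where
  "cplx Q Z R D \<longleftrightarrow> (\<forall>j. is_sheaf Q (Z j) (R j)) \<and>
     (\<forall>j. sheaf_hom Q (Z (Suc j)) (R (Suc j)) (Z j) (R j) (D j)) \<and>
     (\<forall>j. \<forall>r\<in>Q. \<forall>x\<in>Z (Suc (Suc j)) r. D j r (D (Suc j) r x) = 0)"

definition exact :: "nat set set \<Rightarrow> (nat \<Rightarrow> nat set \<Rightarrow> 'k::comm_ring_1 vec set)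
   \<Rightarrow> (nat \<Rightarrow> nat set \<Rightarrow> nat set \<Rightarrow> 'k vec \<Rightarrow> 'k vec) \<Rightarrow> (nat \<Rightarrow> 'k shom) \<Rightarrow> bool" where
  "exact Q Z R D \<longleftrightarrow> cplx Q Z R D \<and> (\<forall>r\<in>Q. D 0 r ` Z 1 r = Z 0 r) \<and>
     (\<forall>j. \<forall>r\<in>Q. \<forall>x\<in>Z (Suc j) r. D j r x = 0 \<longrightarrow> x \<in> D (Suc j) r ` Z (Suc (Suc j)) r)"

definition projc :: "nat set set \<Rightarrow> (nat \<Rightarrow> nat set \<Rightarrow> 'k::comm_ring_1 vec set)
   \<Rightarrow> (nat \<Rightarrow> nat set \<Rightarrow> nat set \<Rightarrow> 'k vec \<Rightarrow> 'k vec) \<Rightarrow> bool" where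
  "projc Q Z R \<longleftrightarrow> (\<forall>j. projective Q (Z (Suc j)) (R (Suc j)))"

definition chain_map :: "nat set set \<Rightarrow> (nat \<Rightarrow> nat set \<Rightarrow> 'k::comm_ring_1 vec set)
   \<Rightarrow> (nat \<Rightarrow> nat set \<Rightarrow> nat set \<Rightarrow> 'k vec \<Rightarrow> 'k vec) \<Rightarrow> (nat \<Rightarrow> 'k shom)
   \<Rightarrow> (nat \<Rightarrow> nat set \<Rightarrow> 'k vec set)
   \<Rightarrow> (nat \<Rightarrow> nat set \<Rightarrow> nat set \<Rightarrow> 'k vec \<Rightarrow> 'k vec) \<Rightarrow> (nat \<Rightarrow> 'k shom) \<Rightarrow> (nat \<Rightarrow> 'k shom) \<Rightarrow> bool" where
  "chain_map Q Z R D W S E u \<longleftrightarrow> (\<forall>j. sheaf_hom Q (Z j) (R j) (W j) (S j) (u j)) \<and>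
     (\<forall>j. \<forall>r\<in>Q. \<forall>x\<in>Z (Suc j) r. E j r (u (Suc j) r x) = u j r (D j r x))"

lemma cplxD:
  assumes "cplx Q Z R D"
  shows "is_sheaf Q (Z j) (R j)" "sheaf_hom Q (Z (Suc j)) (R (Suc j)) (Z j) (R j) (D j)"
    "r \<in> Q \<Longrightarrow> x \<in> Z (Suc (Suc j)) r \<Longrightarrow> D j r (D (Suc j) r x) = 0"
  using assms unfolding cplx_def by auto

lemma exactD:
  assumes "exact Q Z R D"
  shows "cplx Q Z R D" "r \<in> Q \<Longrightarrow> D 0 r ` Z 1 r = Z 0 r"
    "r \<in> Q \<Longrightarrow> x \<in> Z (Suc j) r \<Longrightarrow> D j r x = 0 \<Longrightarrow> x \<in> D (Suc j) r ` Z (Suc (Suc j)) r"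
  using assms unfolding exact_def by blast+

lemma chainD:
  assumes "chain_map Q Z R D W S E u"
  shows "sheaf_hom Q (Z j) (R j) (W j) (S j) (u j)"
    "r \<in> Q \<Longrightarrow> x \<in> Z (Suc j) r \<Longrightarrow> E j r (u (Suc j) r x) = u j r (D j r x)"
  using assms unfolding chain_map_def by auto

lemma lift_chain:
  assumes Z: "cplx Q Z R D" and PZ: "projc Q Z R" and W: "exact Q W S E"
    and u0: "sheaf_hom Q (Z 0) (R 0) (W 0) (S 0) u0"
  shows "\<exists>u. chain_map Q Z R D W S E u \<and> u 0 = u0"
proof -
  have Wc: "cplx Q W S E" using W by (simp add: exact_def)
  define Pr where "Pr j uj h \<longleftrightarrow> sheaf_hom Q (Z (Suc j)) (R (Suc j)) (W (Suc j)) (S (Suc j)) h \<and>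
      (\<forall>r\<in>Q. \<forall>x\<in>Z (Suc j) r. E j r (h r x) = uj r (D j r x))" for j uj h
  define u where "u = rec_nat u0 (\<lambda>j uj. SOME h. Pr j uj h)"
  have uz: "u 0 = u0" and uS: "\<And>j. u (Suc j) = (SOME h. Pr j (u j) h)" by (simp_all add: u_def)
  have main: "sheaf_hom Q (Z j) (R j) (W j) (S j) (u j) \<and> (\<forall>i<j. Pr i (u i) (u (Suc i)))" for j
  proof (induction j)
    case 0 show ?case using u0 uz by simp
  next
    case (Suc j)
    have uj: "sheaf_hom Q (Z j) (R j) (W j) (S j) (u j)" using Suc.IH by blast
    have f: "sheaf_hom Q (Z (Suc j)) (R (Suc j)) (W j) (S j) (\<lambda>r x. u j r (D j r x))"
      by (rule sh_comp[OF cplxD(2)[OF Z] uj cplxD(1)[OF Z]])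
    have im: "\<forall>r\<in>Q. \<forall>x\<in>Z (Suc j) r. u j r (D j r x) \<in> E j r ` W (Suc j) r"
    proof (intro ballI)
      fix r x assume r: "r \<in> Q" and x: "x \<in> Z (Suc j) r"
      have y: "u j r (D j r x) \<in> W j r" using sh_in[OF f r x] .
      show "u j r (D j r x) \<in> E j r ` W (Suc j) r"
      proof (cases j)
        case 0 then show ?thesis using exactD(2)[OF W r] y by simp
      next
        case (Suc i)
        have Pi: "Pr i (u i) (u j)" using Suc.IH Suc by blast
        have Dx: "D j r x \<in> Z (Suc i) r" using sh_in[OF cplxD(2)[OF Z] r x] Suc by simp
        have "E i r (u j r (D j r x)) = u i r (D i r (D j r x))" using Pi r Dx Suc by (simp add: Pr_def)
        also have "D i r (D j r x) = 0" using cplxD(3)[OF Z r] x Suc by simp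
        also have "u i r 0 = 0"
        proof (cases i)
          case 0 then show ?thesis using sh_0[OF u0 cplxD(1)[OF Z]] uz by simp
        next
          case (Suc i')
          then have "Pr i' (u i') (u i)" using Suc.IH \<open>j = Suc i\<close> by auto
          then show ?thesis using sh_0[OF _ cplxD(1)[OF Z]] by (auto simp: Pr_def)
        qed
        finally show ?thesis using exactD(3)[OF W r, of "u j r (D j r x)" i] y Suc by simp
      qed
    qed
    have "\<exists>h. Pr j (u j) h" unfolding Pr_def
      by (rule lift_im[OF _ cplxD(1)[OF Wc] cplxD(1)[OF Wc] cplxD(2)[OF Wc] f im]) (use PZ projc_def in blast)
    then have PS: "Pr j (u j) (u (Suc j))" unfolding uS by (rule someI_ex)
    then have "sheaf_hom Q (Z (Suc j)) (R (Suc j)) (W (Suc j)) (S (Suc j)) (u (Suc j))" unfolding Pr_def by blast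
    moreover have "\<forall>i<Suc j. Pr i (u i) (u (Suc i))" using PS Suc.IH less_Suc_eq by blast
    ultimately show ?case by blast
  qed
  have c: "chain_map Q Z R D W S E u" unfolding chain_map_def
  proof (intro conjI allI ballI)
    fix j show "sheaf_hom Q (Z j) (R j) (W j) (S j) (u j)" using main[of j] by (rule conjunct1)
  next
    fix j r x assume rx: "r \<in> Q" "x \<in> Z (Suc j) r"
    have "Pr j (u j) (u (Suc j))" using main[of "Suc j", THEN conjunct2, rule_format, of j] by simp
    then show "E j r (u (Suc j) r x) = u j r (D j r x)" unfolding Pr_def using rx by blast
  qed
  show ?thesis by (intro exI[of _ u] conjI c uz)
qed


lemma chain_id:
  assumes Z: "cplx Q Z R D"
  shows "chain_map Q Z R D Z R D (\<lambda>j r x. if r \<in> Q \<and> x \<in> Z j r then x else 0)"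
  unfolding chain_map_def
proof (intro conjI allI ballI)
  fix j show "sheaf_hom Q (Z j) (R j) (Z j) (R j) (\<lambda>r x. if r \<in> Q \<and> x \<in> Z j r then x else 0)"
    by (rule sh_id[OF cplxD(1)[OF Z]])
next
  fix j r x assume rx: "r \<in> Q" "x \<in> Z (Suc j) r"
  then show "D j r (if r \<in> Q \<and> x \<in> Z (Suc j) r then x else 0) = (if r \<in> Q \<and> D j r x \<in> Z j r then D j r x else 0)"
    using sh_in[OF cplxD(2)[OF Z] rx] by simp
qed

lemma chain_comp:
  assumes u: "chain_map Q Z R D W S E u" and v: "chain_map Q W S E V T F v" and W: "cplx Q W S E"
  shows "chain_map Q Z R D V T F (\<lambda>j r x. v j r (u j r x))"
  unfolding chain_map_def
proof (intro conjI allI ballI)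
  fix j show "sheaf_hom Q (Z j) (R j) (V j) (T j) (\<lambda>r x. v j r (u j r x))"
    by (rule sh_comp[OF chainD(1)[OF u] chainD(1)[OF v] cplxD(1)[OF W]])
next
  fix j r x assume rx: "r \<in> Q" "x \<in> Z (Suc j) r"
  have "F j r (v (Suc j) r (u (Suc j) r x)) = v j r (E j r (u (Suc j) r x))"
    using chainD(2)[OF v rx(1) sh_in[OF chainD(1)[OF u] rx]] .
  also have "\<dots> = v j r (u j r (D j r x))" using chainD(2)[OF u rx] by simp
  finally show "F j r (v (Suc j) r (u (Suc j) r x)) = v j r (u j r (D j r x))" .
qed

lemma homotopy:
  assumes Z: "cplx Q Z R D" and PZ: "projc Q Z R" and W: "exact Q W S E"
    and u: "chain_map Q Z R D W S E u" and v: "chain_map Q Z R D W S E v"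
    and uv0: "\<forall>r\<in>Q. \<forall>x\<in>Z 0 r. u 0 r x = v 0 r x"
  shows "\<exists>h. (\<forall>j. sheaf_hom Q (Z j) (R j) (W (Suc j)) (S (Suc j)) (h j)) \<and> (\<forall>r x. h 0 r x = 0) \<and>
     (\<forall>j. \<forall>r\<in>Q. \<forall>x\<in>Z (Suc j) r. u (Suc j) r x - v (Suc j) r x = E (Suc j) r (h (Suc j) r x) + h j r (D j r x))"
proof -
  have Wc: "cplx Q W S E" using exactD(1)[OF W] .
  define w where "w j r x = u j r x - v j r x" for j r x
  have wsh: "sheaf_hom Q (Z j) (R j) (W j) (S j) (w j)" for j
    unfolding w_def by (rule sh_diff[OF chainD(1)[OF u] chainD(1)[OF v] cplxD(1)[OF Z] cplxD(1)[OF Wc]])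
  have wch: "E j r (w (Suc j) r x) = w j r (D j r x)" if "r \<in> Q" "x \<in> Z (Suc j) r" for j r x
  proof -
    have "E j r (w (Suc j) r x) = E j r (u (Suc j) r x) - E j r (v (Suc j) r x)"
      unfolding w_def
      by (rule linmap_diff[OF is_sheafD(1)[OF cplxD(1)[OF Wc] that(1)] shD(1)[OF cplxD(2)[OF Wc] that(1)]
            sh_in[OF chainD(1)[OF u] that] sh_in[OF chainD(1)[OF v] that]])
    also have "\<dots> = w j r (D j r x)" unfolding w_def using chainD(2)[OF u that] chainD(2)[OF v that] by simp
    finally show ?thesis .
  qed
  define Pr where "Pr j hj h \<longleftrightarrow> sheaf_hom Q (Z (Suc j)) (R (Suc j)) (W (Suc (Suc j))) (S (Suc (Suc j))) h \<and>
      (\<forall>r\<in>Q. \<forall>x\<in>Z (Suc j) r. E (Suc j) r (h r x) = w (Suc j) r x - hj r (D j r x))" for j hj h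
  define h where "h = rec_nat (\<lambda>r x. 0) (\<lambda>j hj. SOME h. Pr j hj h)"
  have hz: "h 0 = (\<lambda>r x. 0)" and hS: "\<And>j. h (Suc j) = (SOME h'. Pr j (h j) h')" by (simp_all add: h_def)
  have main: "sheaf_hom Q (Z j) (R j) (W (Suc j)) (S (Suc j)) (h j) \<and> (\<forall>i<j. Pr i (h i) (h (Suc i)))" for j
  proof (induction j)
    case 0
    have "sheaf_hom Q (Z 0) (R 0) (W (Suc 0)) (S (Suc 0)) (h 0)" unfolding hz by (rule sh_zero[OF cplxD(1)[OF Wc]])
    then show ?case by blast
  next
    case (Suc j)
    have hj: "sheaf_hom Q (Z j) (R j) (W (Suc j)) (S (Suc j)) (h j)" using Suc.IH by (rule conjunct1)
    have hD: "sheaf_hom Q (Z (Suc j)) (R (Suc j)) (W (Suc j)) (S (Suc j)) (\<lambda>r x. h j r (D j r x))"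
      by (rule sh_comp[OF cplxD(2)[OF Z] hj cplxD(1)[OF Z]])
    have g: "sheaf_hom Q (Z (Suc j)) (R (Suc j)) (W (Suc j)) (S (Suc j)) (\<lambda>r x. w (Suc j) r x - h j r (D j r x))"
      by (rule sh_diff[OF wsh hD cplxD(1)[OF Z] cplxD(1)[OF Wc]])
    have im: "\<forall>r\<in>Q. \<forall>x\<in>Z (Suc j) r. w (Suc j) r x - h j r (D j r x) \<in> E (Suc j) r ` W (Suc (Suc j)) r"
    proof (intro ballI)
      fix r x assume r: "r \<in> Q" and x: "x \<in> Z (Suc j) r"
      have y: "w (Suc j) r x - h j r (D j r x) \<in> W (Suc j) r" using sh_in[OF g r x] .
      have Dx: "D j r x \<in> Z j r" using sh_in[OF cplxD(2)[OF Z] r x] .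
      have "E j r (w (Suc j) r x - h j r (D j r x)) = E j r (w (Suc j) r x) - E j r (h j r (D j r x))"
        by (rule linmap_diff[OF is_sheafD(1)[OF cplxD(1)[OF Wc] r] shD(1)[OF cplxD(2)[OF Wc] r]
            sh_in[OF wsh r x] sh_in[OF hj r Dx]])
      also have "\<dots> = w j r (D j r x) - E j r (h j r (D j r x))" using wch[OF r x] by simp
      also have "\<dots> = 0"
      proof (cases j)
        case 0
        have "w j r (D j r x) = 0" using uv0 r Dx 0 by (simp add: w_def)
        moreover have "h j = (\<lambda>r x. 0)" using hz 0 by simp
        ultimately show ?thesis using linmap_0[OF is_sheafD(1)[OF cplxD(1)[OF Wc] r] shD(1)[OF cplxD(2)[OF Wc] r]]
          by simp
      next
        case (Suc i)
        have Pi: "Pr i (h i) (h j)" using Suc.IH Suc by blast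
        have Dx': "D j r x \<in> Z (Suc i) r" using Dx Suc by simp
        have "E (Suc i) r (h (Suc i) r (D j r x)) = w (Suc i) r (D j r x) - h i r (D i r (D j r x))"
          using Pi r Dx' Suc unfolding Pr_def by blast
        moreover have "D i r (D j r x) = 0" using cplxD(3)[OF Z r, of x i] x Suc by simp
        moreover have "h i r 0 = 0"
        proof (cases i)
          case 0 then show ?thesis using hz by simp
        next
          case (Suc i')
          then have "Pr i' (h i') (h i)" using Suc.IH \<open>j = Suc i\<close> by auto
          then show ?thesis using sh_0[OF _ cplxD(1)[OF Z]] unfolding Pr_def by blast
        qed
        ultimately show ?thesis using Suc by simp
      qed
      finally have "E j r (w (Suc j) r x - h j r (D j r x)) = 0" .
      from exactD(3)[OF W r y this] show "w (Suc j) r x - h j r (D j r x) \<in> E (Suc j) r ` W (Suc (Suc j)) r" .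
    qed
    have "\<exists>h'. Pr j (h j) h'" unfolding Pr_def
      by (rule lift_im[OF _ cplxD(1)[OF Wc] cplxD(1)[OF Wc] cplxD(2)[OF Wc] g im]) (use PZ projc_def in blast)
    then have PS: "Pr j (h j) (h (Suc j))" unfolding hS by (rule someI_ex)
    then have "sheaf_hom Q (Z (Suc j)) (R (Suc j)) (W (Suc (Suc j))) (S (Suc (Suc j))) (h (Suc j))" unfolding Pr_def by blast
    moreover have "\<forall>i<Suc j. Pr i (h i) (h (Suc i))" using PS Suc.IH less_Suc_eq by blast
    ultimately show ?case by blast
  qed
  show ?thesis
  proof (intro exI[of _ h] conjI allI ballI)
    fix j show "sheaf_hom Q (Z j) (R j) (W (Suc j)) (S (Suc j)) (h j)" using main[of j] by (rule conjunct1)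
  next
    fix r x show "h 0 r x = 0" using hz by simp
  next
    fix j r x assume rx: "r \<in> Q" "x \<in> Z (Suc j) r"
    have "Pr j (h j) (h (Suc j))" using main[of "Suc j", THEN conjunct2, rule_format, of j] by simp
    then have "E (Suc j) r (h (Suc j) r x) = w (Suc j) r x - h j r (D j r x)" unfolding Pr_def using rx by blast
    then show "u (Suc j) r x - v (Suc j) r x = E (Suc j) r (h (Suc j) r x) + h j r (D j r x)"
      unfolding w_def by (simp add: algebra_simps)
  qed
qed


definition Kst :: "nat set \<Rightarrow> nat \<Rightarrow> nat set \<Rightarrow> 'k::comm_ring_1 vec set" where
  "Kst q j r = {x. \<forall>N. x N \<noteq> 0 \<longrightarrow> set_decode N \<subseteq> r - q \<and> card (set_decode N) = j}"

definition sg :: "nat \<Rightarrow> nat set \<Rightarrow> 'k::comm_ring_1" where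
  "sg b S = (-1) ^ card {c\<in>S. c < b}"

definition dv :: "nat \<Rightarrow> 'k::comm_ring_1 vec \<Rightarrow> 'k vec" where
  "dv n x = (\<lambda>N. \<Sum>b\<in>{1..n} - set_decode N. sg b (set_decode N) * x (set_encode (insert b (set_decode N))))"

definition hv :: "nat \<Rightarrow> 'k::comm_ring_1 vec \<Rightarrow> 'k vec" where
  "hv a x = (\<lambda>N. if a \<in> set_decode N then x (set_encode (set_decode N - {a})) else 0)"

lemma KstD: "x \<in> Kst q j r \<Longrightarrow> x N \<noteq> 0 \<Longrightarrow> set_decode N \<subseteq> r - q \<and> card (set_decode N) = j"
  unfolding Kst_def by blast

lemma KstD': "x \<in> Kst q j r \<Longrightarrow> finite S \<Longrightarrow> x (set_encode S) \<noteq> 0 \<Longrightarrow> S \<subseteq> r - q \<and> card S = j"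
  using KstD[of x q j r "set_encode S"] by simp

lemma Kst_submod: "submod (Kst q j r :: 'k::comm_ring_1 vec set)"
  unfolding submod_def
proof (intro conjI ballI allI)
  show "0 \<in> Kst q j r" unfolding Kst_def by simp
next
  fix x y :: "'k vec" assume xy: "x \<in> Kst q j r" "y \<in> Kst q j r"
  show "x + y \<in> Kst q j r" unfolding Kst_def
  proof (intro CollectI allI impI)
    fix N assume "(x + y) N \<noteq> 0"
    then have "x N \<noteq> 0 \<or> y N \<noteq> 0" by auto
    then show "set_decode N \<subseteq> r - q \<and> card (set_decode N) = j" using KstD[OF xy(1)] KstD[OF xy(2)] by blast
  qed
next
  fix c and x :: "'k vec" assume x: "x \<in> Kst q j r"
  show "smul c x \<in> Kst q j r" unfolding Kst_def
  proof (intro CollectI allI impI)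
    fix N assume "smul c x N \<noteq> 0"
    then have "x N \<noteq> 0" by auto
    then show "set_decode N \<subseteq> r - q \<and> card (set_decode N) = j" using KstD[OF x] by blast
  qed
qed

lemma Kst_mono: assumes "r \<subseteq> s" shows "Kst q j r \<subseteq> Kst q j s"
proof
  fix x assume x: "x \<in> Kst q j r"
  show "x \<in> Kst q j s" unfolding Kst_def
  proof (intro CollectI allI impI)
    fix N assume "x N \<noteq> 0"
    then show "set_decode N \<subseteq> s - q \<and> card (set_decode N) = j" using KstD[OF x] assms by blast
  qed
qed

lemma sum_app: "(\<Sum>i\<in>I. v i) N = (\<Sum>i\<in>I. v i N)"
  by (induction I rule: infinite_finite_induct) auto

lemma dv_add: "dv n (x + y) = dv n x + dv n y"
  by (rule ext) (simp add: dv_def distrib_left sum.distrib)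

lemma dv_smul: "dv n (smul c x) = smul c (dv n x)"
  by (rule ext) (simp add: dv_def sum_distrib_left algebra_simps)

lemma dv_zero: "dv n 0 = 0"
  by (rule ext) (simp add: dv_def)

lemma dv_Kst:
  assumes x: "x \<in> Kst q (Suc j) r"
  shows "dv n x \<in> Kst q j r"
  unfolding Kst_def
proof (intro CollectI allI impI)
  fix N assume "dv n x N \<noteq> 0"
  then obtain b where b: "b \<in> {1..n} - set_decode N"
    "x (set_encode (insert b (set_decode N))) \<noteq> 0"
  proof -
    have "(\<Sum>b\<in>{1..n} - set_decode N. sg b (set_decode N) * x (set_encode (insert b (set_decode N)))) \<noteq> 0"
      using \<open>dv n x N \<noteq> 0\<close> unfolding dv_def .
    then obtain b where "b \<in> {1..n} - set_decode N" "sg b (set_decode N) * x (set_encode (insert b (set_decode N))) \<noteq> 0"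
      using sum.neutral by meson
    then show ?thesis using that by (metis mult_zero_right)
  qed
  have "insert b (set_decode N) \<subseteq> r - q \<and> card (insert b (set_decode N)) = Suc j"
    using KstD'[OF x _ b(2)] by simp
  then show "set_decode N \<subseteq> r - q \<and> card (set_decode N) = j" using b(1) by simp
qed

lemma sg_insert:
  assumes "finite T" "b \<notin> T"
  shows "sg c (insert b T) = (if b < c then - sg c T else (sg c T :: 'k::comm_ring_1))"
proof (cases "b < c")
  case True
  then have "{x\<in>insert b T. x < c} = insert b {x\<in>T. x < c}" by auto
  then have "card {x\<in>insert b T. x < c} = Suc (card {x\<in>T. x < c})" using assms by simp
  then show ?thesis using True by (simp add: sg_def)
next
  case False
  then have "{x\<in>insert b T. x < c} = {x\<in>T. x < c}" by auto
  then show ?thesis using False by (simp add: sg_def)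
qed

lemma sg_empty_below:
  assumes "\<forall>c\<in>T. \<not> c < b" shows "sg b T = 1"
proof -
  have e: "{c\<in>T. c < b} = {}" using assms by auto
  show ?thesis unfolding sg_def e by simp
qed

lemma pair_cancel:
  fixes f :: "'a \<Rightarrow> 'a \<Rightarrow> 'b::ab_group_add"
  assumes "finite V" "\<And>b c. b \<in> V \<Longrightarrow> c \<in> V \<Longrightarrow> b \<noteq> c \<Longrightarrow> f b c + f c b = 0"
  shows "(\<Sum>b\<in>V. \<Sum>c\<in>V - {b}. f b c) = 0"
  using assms
proof (induction V rule: finite_induct)
  case empty then show ?case by simp
next
  case (insert a V)
  have IH: "(\<Sum>b\<in>V. \<Sum>c\<in>V - {b}. f b c) = 0" using insert by blast
  have e1: "(\<Sum>c\<in>insert a V - {a}. f a c) = (\<Sum>c\<in>V. f a c)"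
    using Diff_insert_absorb[OF insert(2)] by simp
  have e2: "(\<Sum>c\<in>insert a V - {b}. f b c) = f b a + (\<Sum>c\<in>V - {b}. f b c)" if "b \<in> V" for b
  proof -
    have "insert a V - {b} = insert a (V - {b})" using that insert(2) by auto
    then show ?thesis using insert(1,2) by simp
  qed
  have "(\<Sum>b\<in>insert a V. \<Sum>c\<in>insert a V - {b}. f b c)
      = (\<Sum>c\<in>V. f a c) + (\<Sum>b\<in>V. f b a + (\<Sum>c\<in>V - {b}. f b c))"
    using insert(1,2) e1 e2 by simp
  also have "\<dots> = (\<Sum>c\<in>V. f a c + f c a) + (\<Sum>b\<in>V. \<Sum>c\<in>V - {b}. f b c)"
    by (simp add: sum.distrib algebra_simps)
  also have "(\<Sum>c\<in>V. f a c + f c a) = 0"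
  proof (rule sum.neutral, rule ballI)
    fix c assume "c \<in> V"
    moreover then have "c \<noteq> a" using insert(2) by blast
    ultimately show "f a c + f c a = 0" using insert(4)[of a c] by simp
  qed
  finally show ?case using IH by simp
qed

lemma dv_dv: "dv n (dv n (x :: 'k::comm_ring_1 vec)) = 0"
proof (rule ext)
  fix N
  define T where "T = set_decode N"
  have fT: "finite T" by (simp add: T_def)
  define V where "V = {1..n} - T"
  define f where "f b c = sg b T * (sg c (insert b T) * x (set_encode (insert c (insert b T))))" for b c
  have inner: "dv n x (set_encode (insert b T)) = (\<Sum>c\<in>{1..n} - insert b T. sg c (insert b T) * x (set_encode (insert c (insert b T))))" for b
  proof -
    have e: "set_decode (set_encode (insert b T)) = insert b T" by (rule set_encode_inverse) (simp add: fT)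
    show ?thesis unfolding dv_def by (simp only: e)
  qed
  have "dv n (dv n x) N = (\<Sum>b\<in>V. sg b T * dv n x (set_encode (insert b T)))"
    unfolding V_def T_def by (simp only: dv_def[of n "dv n x"])
  also have "\<dots> = (\<Sum>b\<in>V. \<Sum>c\<in>V - {b}. f b c)"
  proof (rule sum.cong[OF refl])
    fix b assume "b \<in> V"
    have e: "{1..n} - insert b T = V - {b}" by (auto simp: V_def)
    show "sg b T * dv n x (set_encode (insert b T)) = (\<Sum>c\<in>V - {b}. f b c)"
      unfolding inner e f_def by (simp only: sum_distrib_left)
  qed
  also have "\<dots> = 0"
  proof (rule pair_cancel)
    show "finite V" by (simp add: V_def)
  next
    fix b c assume bc: "b \<in> V" "c \<in> V" "b \<noteq> c"
    then have nb: "b \<notin> T" "c \<notin> T" by (auto simp: V_def)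
    have ins: "insert c (insert b T) = insert b (insert c T)" by auto
    define X where "X = x (set_encode (insert b (insert c T)))"
    show "f b c + f c b = 0"
    proof (cases "b < c")
      case True
      have e1: "sg c (insert b T) = - sg c T" using sg_insert[OF fT nb(1), of c] True by simp
      have e2: "sg b (insert c T) = sg b T" using sg_insert[OF fT nb(2), of b] True by simp
      show ?thesis unfolding f_def ins X_def[symmetric] e1 e2 by (simp add: algebra_simps)
    next
      case False
      then have "c < b" using bc(3) by simp
      then have e1: "sg c (insert b T) = sg c T" using sg_insert[OF fT nb(1), of c] by simp
      have e2: "sg b (insert c T) = - sg b T" using sg_insert[OF fT nb(2), of b] \<open>c < b\<close> by simp
      show ?thesis unfolding f_def ins X_def[symmetric] e1 e2 by (simp add: algebra_simps)
    qed
  qed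
  finally show "dv n (dv n x) N = 0 N" by simp
qed

lemma dec_enc_ins: "finite T \<Longrightarrow> set_decode (set_encode (insert b T)) = insert b T"
  by (rule set_encode_inverse) simp

lemma dv_at: "dv n x N = (\<Sum>b\<in>{1..n} - set_decode N. sg b (set_decode N) * x (set_encode (insert b (set_decode N))))"
  unfolding dv_def by (rule refl)

lemma hv_at: "hv a x N = (if a \<in> set_decode N then x (set_encode (set_decode N - {a})) else 0)"
  unfolding hv_def by (rule refl)

lemma hv_Kst:
  assumes a: "a \<in> r - q" and x: "x \<in> Kst q j r"
  shows "hv a x \<in> Kst q (Suc j) r"
  unfolding Kst_def
proof (intro CollectI allI impI)
  fix N assume h: "hv a x N \<noteq> 0"
  define T where "T = set_decode N"
  have fT: "finite T" by (simp add: T_def)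
  have aT: "a \<in> T" and xn: "x (set_encode (T - {a})) \<noteq> 0" using h unfolding hv_at T_def[symmetric]
    by (auto split: if_splits)
  have "T - {a} \<subseteq> r - q \<and> card (T - {a}) = j" using KstD'[OF x _ xn] fT by simp
  then show "set_decode N \<subseteq> r - q \<and> card (set_decode N) = Suc j"
    unfolding T_def[symmetric] using aT a fT
    by (metis Diff_empty Diff_insert0 card_Diff_singleton card.remove insert_Diff insert_subset)
qed

lemma hv_zero: "hv a 0 = 0"
  by (rule ext) (simp add: hv_def)

lemma contract:
  assumes r: "r \<subseteq> {1..n}" and a: "a \<in> r - q" and amin: "\<forall>c\<in>r - q. a \<le> c"
    and x: "x \<in> Kst q j r"
  shows "dv n (hv a x) + hv a (dv n x) = (x :: 'k::comm_ring_1 vec)"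
proof (rule ext)
  fix N
  define T where "T = set_decode N"
  define U where "U = {1..n::nat}"
  have fT: "finite T" by (simp add: T_def)
  have aU: "a \<in> U" using a r by (auto simp: U_def)
  have NT: "set_encode T = N" by (simp add: T_def)
  have sgT: "sg a S * x N = x N" if "S \<subseteq> T" "a \<notin> S" for S
  proof (cases "x N = 0")
    case False
    then have "T \<subseteq> r - q" using KstD[OF x] by (simp add: T_def)
    then have "\<forall>d\<in>S. \<not> d < a" using that amin by (metis in_mono leD order.not_eq_order_implies_strict)
    then show ?thesis by (simp add: sg_empty_below)
  qed simp
  have L: "dv n (hv a x) N = (\<Sum>b\<in>U - T. sg b T * (if a \<in> insert b T then x (set_encode (insert b T - {a})) else 0))"
    unfolding dv_at T_def[symmetric] U_def[symmetric] hv_at dec_enc_ins[OF fT] by (rule refl)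
  show "(dv n (hv a x) + hv a (dv n x)) N = x N"
  proof (cases "a \<in> T")
    case True
    have e1: "insert b T - {a} = insert b (T - {a})" if "b \<in> U - T" for b using that True by auto
    have L2: "dv n (hv a x) N = (\<Sum>b\<in>U - T. sg b T * x (set_encode (insert b (T - {a}))))"
      unfolding L by (rule sum.cong[OF refl]) (use True e1 in simp)
    have fTa: "finite (T - {a})" using fT by simp
    have e2: "U - (T - {a}) = insert a (U - T)" using aU True by auto
    have "hv a (dv n x) N = dv n x (set_encode (T - {a}))" unfolding hv_at T_def[symmetric] using True by simp
    also have "\<dots> = (\<Sum>b\<in>U - (T - {a}). sg b (T - {a}) * x (set_encode (insert b (T - {a}))))"
      unfolding dv_at U_def using fTa by (simp del: set_encode_insert)
    also have "\<dots> = sg a (T - {a}) * x (set_encode (insert a (T - {a}))) + (\<Sum>b\<in>U - T. sg b (T - {a}) * x (set_encode (insert b (T - {a}))))"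
      unfolding e2 by (rule sum.insert) (use True in \<open>auto simp: U_def\<close>)
    also have "insert a (T - {a}) = T" using True by auto
    finally have R: "hv a (dv n x) N = sg a (T - {a}) * x N + (\<Sum>b\<in>U - T. sg b (T - {a}) * x (set_encode (insert b (T - {a}))))"
      unfolding NT .
    have Z: "(\<Sum>b\<in>U - T. sg b T * x (set_encode (insert b (T - {a})))) + (\<Sum>b\<in>U - T. sg b (T - {a}) * x (set_encode (insert b (T - {a})))) = 0"
      unfolding sum.distrib[symmetric]
    proof (rule sum.neutral, rule ballI)
      fix b assume b: "b \<in> U - T"
      show "sg b T * x (set_encode (insert b (T - {a}))) + sg b (T - {a}) * x (set_encode (insert b (T - {a}))) = 0"
      proof (cases "x (set_encode (insert b (T - {a}))) = 0")
        case False
        then have "insert b (T - {a}) \<subseteq> r - q" using KstD'[OF x _ False] fTa by simp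
        then have "a < b" using amin b True by (metis Diff_iff insert_subset le_neq_implies_less)
        have Ti: "T = insert a (T - {a})" using True by auto
        have "(sg b T :: 'k) = - sg b (T - {a})" by (subst Ti, subst sg_insert[OF fTa]) (use \<open>a < b\<close> in simp_all)
        then show ?thesis by simp
      qed simp
    qed
    have "sg a (T - {a}) * x N = x N" by (rule sgT) auto
    then show ?thesis using L2 R Z by (simp add: algebra_simps)
  next
    case False
    have R: "hv a (dv n x) N = 0" unfolding hv_at T_def[symmetric] using False by simp
    have "dv n (hv a x) N = (\<Sum>b\<in>U - T. if b = a then sg a T * x (set_encode (insert a T - {a})) else 0)"
      unfolding L by (rule sum.cong[OF refl]) (use False in auto)
    also have "\<dots> = sg a T * x (set_encode (insert a T - {a}))" using aU False by (simp add: U_def)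
    also have "insert a T - {a} = T" using False by simp
    finally have "dv n (hv a x) N = sg a T * x N" unfolding NT .
    moreover have "sg a T * x N = x N" by (rule sgT) (use False in auto)
    ultimately show ?thesis using R by simp
  qed
qed


definition dK :: "nat \<Rightarrow> nat set \<Rightarrow> nat \<Rightarrow> 'k::comm_ring_1 shom" where
  "dK n q j r x = (if r \<in> Uq n q \<and> x \<in> Kst q (Suc j) r then dv n x else 0)"

definition eK :: "nat set \<Rightarrow> 'k::comm_ring_1 shom" where
  "eK q r x = (if r = q \<and> x \<in> kline then x else 0)"

definition ZK :: "nat set set \<Rightarrow> nat set \<Rightarrow> nat \<Rightarrow> nat set \<Rightarrow> 'k::comm_ring_1 vec set" where
  "ZK K q j = (case j of 0 \<Rightarrow> kK_stalk K | Suc i \<Rightarrow> Kst q i)"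

definition RK :: "nat set set \<Rightarrow> nat \<Rightarrow> nat set \<Rightarrow> nat set \<Rightarrow> 'k::comm_ring_1 vec \<Rightarrow> 'k vec" where
  "RK K j = (case j of 0 \<Rightarrow> kK_res K | Suc i \<Rightarrow> (\<lambda>r s x. x))"

definition DK :: "nat \<Rightarrow> nat set \<Rightarrow> nat \<Rightarrow> 'k::comm_ring_1 shom" where
  "DK n q j = (case j of 0 \<Rightarrow> eK q | Suc i \<Rightarrow> dK n q i)"

lemma ZK_simps[simp]: "ZK K q 0 = kK_stalk K" "ZK K q (Suc i) = Kst q i"
  by (simp_all add: ZK_def)
lemma RK_simps[simp]: "RK K 0 = kK_res K" "RK K (Suc i) = (\<lambda>r s x. x)"
  by (simp_all add: RK_def)
lemma DK_simps[simp]: "DK n q 0 = eK q" "DK n q (Suc i) = dK n q i"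
  by (simp_all add: DK_def)

lemma Uq_iff: "r \<in> Uq n q \<longleftrightarrow> r \<subseteq> {1..n} \<and> q \<subseteq> r"
  by (auto simp: Uq_def AF1_def)

lemma kline_submod: "submod (kline :: 'k::comm_ring_1 vec set)"
  unfolding submod_def kline_def by simp

lemma zero_submod: "submod ({0} :: 'k::comm_ring_1 vec set)"
  unfolding submod_def by (simp add: fun_eq_iff)

lemma Kst0: "Kst q 0 r = kline"
proof (intro set_eqI iffI)
  fix x :: "'a vec" assume x: "x \<in> Kst q 0 r"
  show "x \<in> kline" unfolding kline_def
  proof (intro CollectI allI impI)
    fix N :: nat assume "N \<noteq> 0"
    show "x N = 0"
    proof (rule ccontr)
      assume "x N \<noteq> 0"
      then have "card (set_decode N) = 0" using KstD[OF x] by blast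
      then have "set_decode N = {}" by simp
      then have "N = 0" by (metis set_decode_inverse set_encode_empty)
      then show False using \<open>N \<noteq> 0\<close> by simp
    qed
  qed
next
  fix x :: "'a vec" assume x: "x \<in> kline"
  show "x \<in> Kst q 0 r" unfolding Kst_def
  proof (intro CollectI allI impI)
    fix N assume "x N \<noteq> 0"
    then have "N = 0" using x unfolding kline_def by blast
    then show "set_decode N \<subseteq> r - q \<and> card (set_decode N) = 0" by simp
  qed
qed

lemma KstSq: "Kst q (Suc j) q = {0}"
proof (intro set_eqI iffI)
  fix x :: "'a vec" assume x: "x \<in> Kst q (Suc j) q"
  have "x N = 0" for N
  proof (rule ccontr)
    assume "x N \<noteq> 0"
    then have "set_decode N \<subseteq> q - q \<and> card (set_decode N) = Suc j" using KstD[OF x] by blast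
    then have "set_decode N = {}" "card (set_decode N) = Suc j" by auto
    then show False by simp
  qed
  then show "x \<in> {0}" by (simp add: fun_eq_iff)
qed (simp add: Kst_def)

lemma dv_Kst0: "x \<in> Kst q 0 r \<Longrightarrow> dv n x = 0"
  using dv_Kst[of x q "0 - 1"]
proof -
  assume x: "x \<in> Kst q 0 r"
  show "dv n x = 0"
  proof (rule ext)
    fix N
    have "x (set_encode (insert b (set_decode N))) = 0" for b
    proof (rule ccontr)
      assume "x (set_encode (insert b (set_decode N))) \<noteq> 0"
      from KstD'[OF x finite_insert[THEN iffD2, OF finite_set_decode] this] show False by simp
    qed
    then show "dv n x N = 0 N" unfolding dv_at by (simp del: set_encode_insert)
  qed
qed

lemma Kst_sheaf: "is_sheaf Q (Kst q j :: nat set \<Rightarrow> 'k::comm_ring_1 vec set) (\<lambda>r s x. x)"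
  unfolding is_sheaf_def
proof (intro conjI ballI impI allI)
  fix r :: "nat set" show "submod (Kst q j r :: 'k vec set)" by (rule Kst_submod)
next
  fix r s :: "nat set" assume "r \<subseteq> s"
  then have "Kst q j r \<subseteq> (Kst q j s :: 'k vec set)" by (rule Kst_mono)
  then show "linmap (Kst q j r :: 'k vec set) (Kst q j s) (\<lambda>x. x)"
    unfolding linmap_def by blast
qed auto

lemma dK_hom:
  shows "sheaf_hom (Uq n q) (Kst q (Suc j)) (\<lambda>r s x. x) (Kst q j) (\<lambda>r s x. x) (dK n q j :: 'k::comm_ring_1 shom)"
  unfolding sheaf_hom_def
proof (intro conjI ballI impI allI)
  fix r assume r: "r \<in> Uq n q"
  show "linmap (Kst q (Suc j) r) (Kst q j r) (dK n q j r :: 'k vec \<Rightarrow> 'k vec)"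
    unfolding linmap_def
  proof (intro conjI ballI allI)
    fix x :: "'k vec" assume "x \<in> Kst q (Suc j) r"
    then show "dK n q j r x \<in> Kst q j r" using r dv_Kst by (simp add: dK_def)
  next
    fix x y :: "'k vec" assume "x \<in> Kst q (Suc j) r" "y \<in> Kst q (Suc j) r"
    moreover then have "x + y \<in> Kst q (Suc j) r" using submod_add[OF Kst_submod] by blast
    ultimately show "dK n q j r (x + y) = dK n q j r x + dK n q j r y" using r by (simp add: dK_def dv_add)
  next
    fix c and x :: "'k vec" assume "x \<in> Kst q (Suc j) r"
    moreover then have "smul c x \<in> Kst q (Suc j) r" using submod_smul[OF Kst_submod] by blast
    ultimately show "dK n q j r (smul c x) = smul c (dK n q j r x)" using r by (simp add: dK_def dv_smul)
  qed
next
  fix r s and x :: "'k vec" assume "r \<in> Uq n q" "s \<in> Uq n q" "r \<subseteq> s" "x \<in> Kst q (Suc j) r"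
  then show "dK n q j s x = dK n q j r x" using Kst_mono[of r s q "Suc j"] by (auto simp: dK_def)
next
  fix r and x :: "'k vec" assume "r \<notin> Uq n q \<or> x \<notin> Kst q (Suc j) r"
  then show "dK n q j r x = 0" by (auto simp: dK_def)
qed

lemma kK_sheaf:
  assumes conv: "\<And>p s r. p \<in> Q \<Longrightarrow> s \<in> Q \<Longrightarrow> r \<in> Q \<Longrightarrow> p \<subseteq> s \<Longrightarrow> s \<subseteq> r \<Longrightarrow> p \<in> L \<Longrightarrow> r \<in> L \<Longrightarrow> s \<in> L"
  shows "is_sheaf Q (kK_stalk L :: nat set \<Rightarrow> 'k::comm_ring_1 vec set) (kK_res L)"
  unfolding is_sheaf_def
proof (intro conjI ballI impI allI)
  fix r :: "nat set" show "submod (kK_stalk L r :: 'k vec set)"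
    unfolding kK_stalk_def using kline_submod[where 'k='k] zero_submod[where 'k='k] by simp
next
  fix r s :: "nat set" assume "r \<subseteq> s"
  show "linmap (kK_stalk L r :: 'k vec set) (kK_stalk L s) (kK_res L r s)"
    unfolding linmap_def kK_stalk_def kK_res_def kline_def by (auto simp: fun_eq_iff)
next
  fix r :: "nat set" and x :: "'k vec" assume "x \<in> kK_stalk L r"
  then show "kK_res L r r x = x" unfolding kK_stalk_def kK_res_def by (auto split: if_splits)
next
  fix p s r and x :: "'k vec" assume a: "p \<in> Q" "s \<in> Q" "r \<in> Q" "p \<subseteq> s" "s \<subseteq> r" "x \<in> kK_stalk L p"
  show "kK_res L s r (kK_res L p s x) = kK_res L p r x"
  proof (cases "p \<in> L")
    case True
    then show ?thesis using conv[OF a(1-5) True] unfolding kK_res_def by auto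
  next
    case False
    then have "x = 0" using a(6) unfolding kK_stalk_def by simp
    then show ?thesis unfolding kK_res_def by simp
  qed
qed

lemma eK_hom:
  assumes hq: "q \<in> Uq n q" and KQ: "\<forall>r\<in>Uq n q. r \<in> K \<longleftrightarrow> r = q"
  shows "sheaf_hom (Uq n q) (Kst q 0) (\<lambda>r s x. x) (kK_stalk K) (kK_res K) (eK q :: 'k::comm_ring_1 shom)"
  unfolding sheaf_hom_def Kst0
proof (intro conjI ballI impI allI)
  fix r assume r: "r \<in> Uq n q"
  show "linmap kline (kK_stalk K r) (eK q r :: 'k vec \<Rightarrow> 'k vec)"
  proof (cases "r = q")
    case True
    then have "r \<in> K" using KQ r by blast
    then show ?thesis using True unfolding linmap_def eK_def kK_stalk_def
      using submod_add[OF kline_submod] submod_smul[OF kline_submod] by auto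
  next
    case False
    then have "r \<notin> K" using KQ r by blast
    then show ?thesis using False unfolding linmap_def eK_def kK_stalk_def by (auto simp: fun_eq_iff)
  qed
next
  fix r s and x :: "'k vec" assume a: "r \<in> Uq n q" "s \<in> Uq n q" "r \<subseteq> s" "x \<in> kline"
  show "eK q s x = kK_res K r s (eK q r x)"
  proof (cases "s = q")
    case True
    then have "r = q" using a Uq_iff by blast
    then show ?thesis using True KQ a unfolding eK_def kK_res_def by auto
  next
    case False
    then have "s \<notin> K" using KQ a by blast
    then show ?thesis using False unfolding eK_def kK_res_def by auto
  qed
next
  fix r and x :: "'k vec" assume "r \<notin> Uq n q \<or> x \<notin> kline"
  then show "eK q r x = 0" using hq unfolding eK_def by auto
qed

lemma exact_step:
  assumes r: "r \<in> Uq n q" and rq: "r \<noteq> q" and x: "x \<in> Kst q j r" and dx: "dv n x = (0 :: 'k::comm_ring_1 vec)"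
  shows "hv (Min (r - q)) x \<in> Kst q (Suc j) r \<and> x = dv n (hv (Min (r - q)) x)"
proof -
  have rs: "r \<subseteq> {1..n}" "q \<subseteq> r" using r Uq_iff by auto
  then have fin: "finite (r - q)" by (meson finite_Diff finite_atLeastAtMost finite_subset)
  have ne: "r - q \<noteq> {}" using rs rq by blast
  define a where "a = Min (r - q)"
  have a: "a \<in> r - q" unfolding a_def using Min_in[OF fin ne] .
  have amin: "\<forall>c\<in>r - q. a \<le> c" unfolding a_def using Min_le[OF fin] by blast
  have "dv n (hv a x) + hv a (dv n x) = x" by (rule contract[OF rs(1) a amin x])
  then have "x = dv n (hv a x)" unfolding dx hv_zero by simp
  then show ?thesis using hv_Kst[OF a x] unfolding a_def by simp
qed

lemma ZK_exact:
  assumes hq: "q \<in> Uq n q" and KQ: "\<forall>r\<in>Uq n q. r \<in> K \<longleftrightarrow> r = q"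
  shows "exact (Uq n q) (ZK K q) (RK K) (DK n q :: nat \<Rightarrow> 'k::comm_ring_1 shom)"
  unfolding exact_def cplx_def
proof (intro conjI allI ballI impI)
  fix j show "is_sheaf (Uq n q) (ZK K q j :: nat set \<Rightarrow> 'k vec set) (RK K j)"
  proof (cases j)
    case 0
    have "is_sheaf (Uq n q) (kK_stalk K :: nat set \<Rightarrow> 'k vec set) (kK_res K)"
      by (rule kK_sheaf) (use KQ in blast)
    then show ?thesis using 0 by simp
  next
    case (Suc i) then show ?thesis using Kst_sheaf by simp
  qed
next
  fix j show "sheaf_hom (Uq n q) (ZK K q (Suc j)) (RK K (Suc j)) (ZK K q j) (RK K j) (DK n q j :: 'k shom)"
  proof (cases j)
    case 0 then show ?thesis using eK_hom[OF hq KQ] by simp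
  next
    case (Suc i) then show ?thesis using dK_hom by simp
  qed
next
  fix j r and x :: "'k vec" assume r: "r \<in> Uq n q" and x: "x \<in> ZK K q (Suc (Suc j)) r"
  show "DK n q j r (DK n q (Suc j) r x) = 0"
  proof (cases j)
    case 0
    show ?thesis
    proof (cases "r = q")
      case True
      then have "x = 0" using x 0 KstSq by auto
      then show ?thesis using 0 True by (simp add: dK_def eK_def dv_zero)
    next
      case False then show ?thesis using 0 by (simp add: eK_def)
    qed
  next
    case (Suc i)
    have x': "x \<in> Kst q (Suc (Suc i)) r" using x Suc by simp
    have "dv n x \<in> Kst q (Suc i) r" using dv_Kst[OF x'] .
    then show ?thesis using Suc r x' dv_dv[of n x] by (simp add: dK_def)
  qed
next
  fix r assume r: "r \<in> Uq n q"
  show "DK n q 0 r ` ZK K q 1 r = (ZK K q 0 r :: 'k vec set)"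
  proof (cases "r = q")
    case True
    then have "r \<in> K" using KQ r by blast
    then show ?thesis using True by (auto simp: Kst0 eK_def kK_stalk_def image_def)
  next
    case False
    then have "r \<notin> K" using KQ r by blast
    moreover have "(0::'k vec) \<in> kline" by (simp add: kline_def)
    ultimately show ?thesis using False by (auto simp: Kst0 eK_def kK_stalk_def image_def)
  qed
next
  fix j r and x :: "'k vec" assume r: "r \<in> Uq n q" and x: "x \<in> ZK K q (Suc j) r" and dx: "DK n q j r x = 0"
  have x': "x \<in> Kst q j r" using x by simp
  have z: "(0::'k vec) \<in> Kst q (Suc j) r" using submod_0[OF Kst_submod] .
  show "x \<in> DK n q (Suc j) r ` ZK K q (Suc (Suc j)) r"
  proof (cases "r = q")
    case True
    have "x = 0"
    proof (cases j)
      case 0 then show ?thesis using dx x' True by (simp add: eK_def Kst0)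
    next
      case (Suc i) then show ?thesis using x' True KstSq by auto
    qed
    moreover have "dK n q j r 0 = 0" by (simp add: dK_def dv_zero)
    ultimately show ?thesis using z by (metis DK_simps(2) ZK_simps(2) image_eqI)
  next
    case False
    have "dv n x = 0"
    proof (cases j)
      case 0 then show ?thesis using dv_Kst0 x' by simp
    next
      case (Suc i) then show ?thesis using dx x' r by (simp add: dK_def)
    qed
    from exact_step[OF r False x' this]
    have "hv (Min (r - q)) x \<in> Kst q (Suc j) r" "x = dK n q j r (hv (Min (r - q)) x)"
      using r by (auto simp: dK_def)
    then show ?thesis by (metis DK_simps(2) ZK_simps(2) image_eqI)
  qed
qed


definition ev :: "nat set \<Rightarrow> 'k::comm_ring_1 vec" where
  "ev S = (\<lambda>N. if N = set_encode S then 1 else 0)"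

definition IR :: "nat \<Rightarrow> nat set \<Rightarrow> nat \<Rightarrow> nat set \<Rightarrow> nat set set" where
  "IR n q j r = {S. S \<subseteq> {1..n} - q \<and> card S = j \<and> S \<subseteq> r}"

lemma IR_finite: "finite (IR n q j r)"
proof -
  have "IR n q j r \<subseteq> Pow {1..n}" unfolding IR_def by auto
  then show ?thesis by (rule finite_subset) simp
qed

lemma IR_mem: "S \<in> IR n q j r \<Longrightarrow> S \<subseteq> {1..n} - q \<and> card S = j \<and> S \<subseteq> r \<and> finite S"
  unfolding IR_def by (auto intro: finite_subset)

lemma ev_Kst:
  assumes "S \<in> IR n q j r" shows "(ev S :: 'k::comm_ring_1 vec) \<in> Kst q j r"
  unfolding Kst_def
proof (intro CollectI allI impI)
  fix N assume "ev S N \<noteq> (0::'k)"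
  then have "N = set_encode S" unfolding ev_def by (auto split: if_splits)
  then show "set_decode N \<subseteq> r - q \<and> card (set_decode N) = j" using IR_mem[OF assms] by auto
qed

lemma smul_add_left: "smul (a + b) w = smul a w + smul b w"
  by (rule ext) (simp add: distrib_right)

lemma smul_smul: "smul (c * a) w = smul c (smul a w)"
  by (rule ext) (simp add: mult.assoc)

lemma smul_sum: "smul c (\<Sum>i\<in>I. v i) = (\<Sum>i\<in>I. smul c (v i))"
  by (rule ext) (simp add: sum_app sum_distrib_left)

lemma decomp:
  assumes r: "r \<in> Uq n q" and x: "x \<in> Kst q j r"
  shows "x = (\<Sum>S\<in>IR n q j r. smul (x (set_encode S)) (ev S :: 'k::comm_ring_1 vec))"
proof (rule ext)
  fix N
  define T where "T = set_decode N"
  have rs: "r \<subseteq> {1..n}" using r Uq_iff by blast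
  have "(\<Sum>S\<in>IR n q j r. smul (x (set_encode S)) (ev S :: 'k vec)) N
      = (\<Sum>S\<in>IR n q j r. if S = T then x N else 0)"
    unfolding sum_app
  proof (rule sum.cong[OF refl])
    fix S assume "S \<in> IR n q j r"
    then have fS: "finite S" using IR_mem by blast
    have "N = set_encode S \<longleftrightarrow> S = T" unfolding T_def using fS by auto
    then show "smul (x (set_encode S)) (ev S) N = (if S = T then x N else 0)"
      unfolding ev_def T_def by auto
  qed
  also have "\<dots> = (if T \<in> IR n q j r then x N else 0)" using IR_finite by simp
  also have "\<dots> = x N"
  proof (cases "x N = 0")
    case False
    then have "T \<subseteq> r - q \<and> card T = j" using KstD[OF x] unfolding T_def by blast
    then have "T \<in> IR n q j r" unfolding IR_def using rs by auto
    then show ?thesis by simp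
  qed simp
  finally show "x N = (\<Sum>S\<in>IR n q j r. smul (x (set_encode S)) (ev S :: 'k vec)) N" by simp
qed

lemma smul_0_left: "smul 0 w = 0"
  by (rule ext) simp

lemma Kst_proj:
  assumes hq: "q \<subseteq> {1..n}"
  shows "projective (Uq n q) (Kst q j :: nat set \<Rightarrow> 'k::comm_ring_1 vec set) (\<lambda>r s x. x)"
  unfolding projective_def
proof (intro allI impI)
  fix B \<rho>B C \<rho>C g and f :: "'k shom"
  assume B: "is_sheaf (Uq n q) B \<rho>B" and C: "is_sheaf (Uq n q) C \<rho>C" and g: "sheaf_hom (Uq n q) B \<rho>B C \<rho>C g"
    and sj: "\<forall>p\<in>Uq n q. g p ` B p = C p" and f: "sheaf_hom (Uq n q) (Kst q j) (\<lambda>r s x. x) C \<rho>C f"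
  have rS: "q \<union> S \<in> Uq n q" if "S \<subseteq> {1..n}" for S using hq that Uq_iff by auto
  define bS where "bS S = (SOME b. b \<in> B (q \<union> S) \<and> g (q \<union> S) b = f (q \<union> S) (ev S))" for S
  have evS: "(ev S :: 'k vec) \<in> Kst q j (q \<union> S)" if "S \<in> IR n q j r" for S r
  proof -
    have "S \<in> IR n q j (q \<union> S)" using IR_mem[OF that] unfolding IR_def by auto
    then show ?thesis by (rule ev_Kst)
  qed
  have bS: "bS S \<in> B (q \<union> S) \<and> g (q \<union> S) (bS S) = f (q \<union> S) (ev S)" if "S \<in> IR n q j r" for S r
  proof -
    from IR_mem[OF that] have Sn: "S \<subseteq> {1..n}" by auto
    have "f (q \<union> S) (ev S) \<in> C (q \<union> S)" using sh_in[OF f rS[OF Sn] evS[OF that]] .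
    moreover have "g (q \<union> S) ` B (q \<union> S) = C (q \<union> S)" using sj rS[OF Sn] by (rule bspec)
    ultimately have "f (q \<union> S) (ev S) \<in> g (q \<union> S) ` B (q \<union> S)" by (simp only:)
    then obtain b where fb: "f (q \<union> S) (ev S) = g (q \<union> S) b" and b: "b \<in> B (q \<union> S)" by (rule imageE)
    have "\<exists>b. b \<in> B (q \<union> S) \<and> g (q \<union> S) b = f (q \<union> S) (ev S)" by (intro exI[of _ b] conjI b fb[symmetric])
    then show ?thesis unfolding bS_def by (rule someI_ex)
  qed
  define w where "w r S = \<rho>B (q \<union> S) r (bS S)" for r S
  have qSr: "q \<union> S \<subseteq> r" "q \<union> S \<in> Uq n q" if "r \<in> Uq n q" "S \<in> IR n q j r" for r S
  proof -
    have a: "S \<subseteq> {1..n}" "S \<subseteq> r" using IR_mem[OF that(2)] by auto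
    have "q \<subseteq> r" using that(1) unfolding Uq_iff ..
    then show "q \<union> S \<subseteq> r" using a by blast
    show "q \<union> S \<in> Uq n q" by (rule rS[OF a(1)])
  qed
  have wB: "w r S \<in> B r" if "r \<in> Uq n q" "S \<in> IR n q j r" for r S
    unfolding w_def
    using linmap_in[OF is_sheafD(2)[OF B qSr(2)[OF that] that(1) qSr(1)[OF that]] bS[OF that(2), THEN conjunct1]] .
  define h where "h r x = (if r \<in> Uq n q \<and> x \<in> Kst q j r then (\<Sum>S\<in>IR n q j r. smul (x (set_encode S)) (w r S)) else 0)" for r x
  have hsum: "h r x = (\<Sum>S\<in>IR n q j r. smul (x (set_encode S)) (w r S))" if "r \<in> Uq n q" "x \<in> Kst q j r" for r and x :: "'k vec"
    using that by (simp add: h_def)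
  have hsh: "sheaf_hom (Uq n q) (Kst q j) (\<lambda>r s x. x) B \<rho>B h"
    unfolding sheaf_hom_def
  proof (intro conjI ballI impI allI)
    fix r assume r: "r \<in> Uq n q"
    note sB = is_sheafD(1)[OF B r]
    show "linmap (Kst q j r) (B r) (h r)" unfolding linmap_def
    proof (intro conjI ballI allI)
      fix x :: "'k vec" assume x: "x \<in> Kst q j r"
      show "h r x \<in> B r" unfolding hsum[OF r x]
        by (rule submod_sum[OF sB IR_finite]) (use submod_smul[OF sB] wB[OF r] in blast)
    next
      fix x y :: "'k vec" assume x: "x \<in> Kst q j r" and y: "y \<in> Kst q j r"
      have xy: "x + y \<in> Kst q j r" using submod_add[OF Kst_submod] x y by blast
      show "h r (x + y) = h r x + h r y"
        unfolding hsum[OF r x] hsum[OF r y] hsum[OF r xy] by (simp only: plus_fun_apply smul_add_left sum.distrib)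
    next
      fix c and x :: "'k vec" assume x: "x \<in> Kst q j r"
      have cx: "smul c x \<in> Kst q j r" using submod_smul[OF Kst_submod] x by blast
      show "h r (smul c x) = smul c (h r x)"
        unfolding hsum[OF r x] hsum[OF r cx] by (simp only: smul_apply smul_smul smul_sum)
    qed
  next
    fix r s and x :: "'k vec" assume a: "r \<in> Uq n q" "s \<in> Uq n q" "r \<subseteq> s" "x \<in> Kst q j r"
    have xs: "x \<in> Kst q j s" using Kst_mono[OF a(3)] a(4) by blast
    have sub: "IR n q j r \<subseteq> IR n q j s" using a(3) unfolding IR_def by auto
    note lrs = is_sheafD(2)[OF B a(1-3)]
    have "h s x = (\<Sum>S\<in>IR n q j s. smul (x (set_encode S)) (w s S))" by (rule hsum[OF a(2) xs])
    also have "\<dots> = (\<Sum>S\<in>IR n q j r. smul (x (set_encode S)) (w s S))"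
    proof (rule sum.mono_neutral_right[OF IR_finite sub], rule ballI)
      fix S assume S: "S \<in> IR n q j s - IR n q j r"
      have "x (set_encode S) = 0"
      proof (rule ccontr)
        assume nz: "x (set_encode S) \<noteq> 0"
        have fS: "finite S" using IR_mem S by blast
        have "S \<subseteq> r - q" using KstD'[OF a(4) fS nz] by blast
        then show False using S unfolding IR_def by auto
      qed
      then show "smul (x (set_encode S)) (w s S) = 0" by (simp add: smul_0_left)
    qed
    also have "\<dots> = (\<Sum>S\<in>IR n q j r. \<rho>B r s (smul (x (set_encode S)) (w r S)))"
    proof (rule sum.cong[OF refl])
      fix S assume S: "S \<in> IR n q j r"
      have "w s S = \<rho>B r s (w r S)" unfolding w_def
        using is_sheafD2(2)[OF B qSr(2)[OF a(1) S] a(1) a(2) qSr(1)[OF a(1) S] a(3) bS[OF S, THEN conjunct1]] by simp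
      then show "smul (x (set_encode S)) (w s S) = \<rho>B r s (smul (x (set_encode S)) (w r S))"
        using linmap_smul[OF lrs wB[OF a(1) S]] by simp
    qed
    also have "\<dots> = \<rho>B r s (\<Sum>S\<in>IR n q j r. smul (x (set_encode S)) (w r S))"
      by (rule linmap_sum[OF is_sheafD(1)[OF B a(1)] lrs IR_finite, symmetric])
         (use submod_smul[OF is_sheafD(1)[OF B a(1)]] wB[OF a(1)] in blast)
    also have "\<dots> = \<rho>B r s (h r x)" using hsum[OF a(1) a(4)] by simp
    finally show "h s x = \<rho>B r s (h r x)" .
  next
    fix r and x :: "'k vec" assume "r \<notin> Uq n q \<or> x \<notin> Kst q j r"
    then show "h r x = 0" unfolding h_def by auto
  qed
  have gh: "g r (h r x) = f r x" if r: "r \<in> Uq n q" and x: "x \<in> Kst q j r" for r and x :: "'k vec"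
  proof -
    note sB = is_sheafD(1)[OF B r] and lg = shD(1)[OF g r] and lf = shD(1)[OF f r]
    have "g r (h r x) = (\<Sum>S\<in>IR n q j r. g r (smul (x (set_encode S)) (w r S)))"
      unfolding hsum[OF r x]
      by (rule linmap_sum[OF sB lg IR_finite]) (use submod_smul[OF sB] wB[OF r] in blast)
    also have "\<dots> = (\<Sum>S\<in>IR n q j r. f r (smul (x (set_encode S)) (ev S)))"
    proof (rule sum.cong[OF refl])
      fix S assume S: "S \<in> IR n q j r"
      have "g r (w r S) = \<rho>C (q \<union> S) r (g (q \<union> S) (bS S))"
        unfolding w_def by (rule shD(2)[OF g qSr(2)[OF r S] r qSr(1)[OF r S] bS[OF S, THEN conjunct1]])
      also have "\<dots> = \<rho>C (q \<union> S) r (f (q \<union> S) (ev S))" using bS[OF S] by simp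
      also have "\<dots> = f r (ev S)"
        using shD(2)[OF f qSr(2)[OF r S] r qSr(1)[OF r S] evS[OF S]] by simp
      finally have "g r (w r S) = f r (ev S)" .
      then show "g r (smul (x (set_encode S)) (w r S)) = f r (smul (x (set_encode S)) (ev S))"
        using linmap_smul[OF lg wB[OF r S]] linmap_smul[OF lf ev_Kst[OF S]] by simp
    qed
    also have "\<dots> = f r (\<Sum>S\<in>IR n q j r. smul (x (set_encode S)) (ev S))"
      by (rule linmap_sum[OF Kst_submod lf IR_finite, symmetric])
         (use submod_smul[OF Kst_submod] ev_Kst in blast)
    also have "\<dots> = f r x" using decomp[OF r x] by simp
    finally show ?thesis .
  qed
  show "\<exists>h. sheaf_hom (Uq n q) (Kst q j) (\<lambda>r s x. x) B \<rho>B h \<and> (\<forall>p\<in>Uq n q. \<forall>x\<in>Kst q j p. g p (h p x) = f p x)"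
    using hsh gh by blast
qed


lemma omega_sheaf: "is_sheaf (Uq n q) (omega_stalk n :: nat set \<Rightarrow> 'k::comm_ring_1 vec set) (omega_res n)"
proof -
  have "is_sheaf (Uq n q) (kK_stalk {{1..n}} :: nat set \<Rightarrow> 'k vec set) (kK_res {{1..n}})"
    by (rule kK_sheaf) (auto simp: Uq_iff)
  then show ?thesis unfolding omega_stalk_def[abs_def] omega_res_def .
qed

lemma omega_res_0: "omega_res n r s 0 = 0"
  by (simp add: omega_res_def kK_res_def)

lemma omega_stalk_ne: "r \<noteq> {1..n} \<Longrightarrow> omega_stalk n r = {0}"
  by (simp add: omega_stalk_def kK_stalk_def)

lemma omega_stalk_top: "omega_stalk n {1..n} = kline"
  by (simp add: omega_stalk_def kK_stalk_def)

lemma homK_vanish: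
  assumes hq: "q \<subseteq> {1..n}"
    and psi: "sheaf_hom (Uq n q) (Kst q j) (\<lambda>r s x. x) (omega_stalk n) (omega_res n) (\<psi> :: 'k::comm_ring_1 shom)"
    and top: "j = card ({1..n} - q) \<Longrightarrow> \<psi> {1..n} (ev ({1..n} - q)) = 0"
  shows "\<psi> r x = 0"
proof (cases "r \<in> Uq n q \<and> x \<in> Kst q j r")
  case False
  then show ?thesis using shD(3,4)[OF psi] by blast
next
  case True
  then have r: "r \<in> Uq n q" and x: "x \<in> Kst q j r" by auto
  have l: "linmap (Kst q j r) (omega_stalk n r) (\<psi> r)" using shD(1)[OF psi r] .
  have z: "\<psi> r (ev S) = 0" if S: "S \<in> IR n q j r" for S
  proof -
    have Sm: "S \<subseteq> {1..n} - q" "card S = j" "S \<subseteq> r" "finite S" using IR_mem[OF S] by auto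
    have qS: "q \<union> S \<in> Uq n q" "q \<union> S \<subseteq> r" using Sm r hq Uq_iff by auto
    have e: "ev S \<in> Kst q j (q \<union> S)" using ev_Kst[of S n q j "q \<union> S"] Sm unfolding IR_def by auto
    have "\<psi> r (ev S) = omega_res n (q \<union> S) r (\<psi> (q \<union> S) (ev S))"
      using shD(2)[OF psi qS(1) r qS(2) e] by simp
    also have "\<psi> (q \<union> S) (ev S) = 0"
    proof (cases "q \<union> S = {1..n}")
      case True
      then have "S = {1..n} - q" using Sm(1) by auto
      then show ?thesis using top Sm(2) True by auto
    next
      case False
      then show ?thesis using sh_in[OF psi qS(1) e] unfolding omega_stalk_ne[OF False] by simp
    qed
    finally show ?thesis by (simp only: omega_res_0)
  qed
  have "\<psi> r x = \<psi> r (\<Sum>S\<in>IR n q j r. smul (x (set_encode S)) (ev S))" using decomp[OF r x] by simp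
  also have "\<dots> = (\<Sum>S\<in>IR n q j r. \<psi> r (smul (x (set_encode S)) (ev S)))"
    by (rule linmap_sum[OF Kst_submod l IR_finite]) (use submod_smul[OF Kst_submod] ev_Kst in blast)
  also have "\<dots> = 0"
  proof (rule sum.neutral, rule ballI)
    fix S assume S: "S \<in> IR n q j r"
    show "\<psi> r (smul (x (set_encode S)) (ev S)) = 0"
      using linmap_smul[OF l ev_Kst[OF S]] z[OF S] by (simp add: fun_eq_iff)
  qed
  finally show ?thesis .
qed

definition psc :: "nat \<Rightarrow> nat set \<Rightarrow> 'k::comm_ring_1 \<Rightarrow> 'k shom" where
  "psc n q c r x = (if r = {1..n} \<and> x \<in> Kst q (card ({1..n} - q)) {1..n}
      then (\<lambda>N. if N = 0 then c * x (set_encode ({1..n} - q)) else 0) else 0)"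

lemma Kst_top_zero:
  assumes r: "r \<in> Uq n q" and rt: "r \<noteq> {1..n}" and x: "x \<in> Kst q (card ({1..n} - q)) r"
  shows "x = 0"
proof (rule ext)
  fix N show "x N = 0 N"
  proof (rule ccontr)
    assume "x N \<noteq> 0 N"
    then have "x N \<noteq> 0" by simp
    then have d: "set_decode N \<subseteq> r - q" "card (set_decode N) = card ({1..n} - q)" using KstD[OF x] by auto
    have rs: "r \<subseteq> {1..n}" "q \<subseteq> r" using r Uq_iff by auto
    have "set_decode N \<subseteq> {1..n} - q" using d(1) rs by blast
    then have "set_decode N = {1..n} - q" using d(2) by (simp add: card_subset_eq)
    then have "{1..n} - q \<subseteq> r" using d(1) by blast
    then have "r = {1..n}" using rs by blast
    then show False using rt by simp
  qed
qed

lemma psc_hom: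
  assumes hq: "q \<subseteq> {1..n}"
  shows "sheaf_hom (Uq n q) (Kst q (card ({1..n} - q))) (\<lambda>r s x. x) (omega_stalk n) (omega_res n) (psc n q c :: 'k::comm_ring_1 shom)"
  unfolding sheaf_hom_def
proof (intro conjI ballI impI allI)
  fix r assume r: "r \<in> Uq n q"
  show "linmap (Kst q (card ({1..n} - q)) r) (omega_stalk n r) (psc n q c r :: 'k vec \<Rightarrow> 'k vec)"
  proof (cases "r = {1..n}")
    case True
    show ?thesis unfolding linmap_def
    proof (intro conjI ballI allI)
      fix x :: "'k vec" assume "x \<in> Kst q (card ({1..n} - q)) r"
      then show "psc n q c r x \<in> omega_stalk n r" unfolding True omega_stalk_top
        by (simp add: psc_def kline_def)
    next
      fix x y :: "'k vec" assume "x \<in> Kst q (card ({1..n} - q)) r" "y \<in> Kst q (card ({1..n} - q)) r"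
      moreover then have "x + y \<in> Kst q (card ({1..n} - q)) r" using submod_add[OF Kst_submod] by blast
      ultimately show "psc n q c r (x + y) = psc n q c r x + psc n q c r y" using True
        by (simp add: psc_def fun_eq_iff distrib_left)
    next
      fix d and x :: "'k vec" assume "x \<in> Kst q (card ({1..n} - q)) r"
      moreover then have "smul d x \<in> Kst q (card ({1..n} - q)) r" using submod_smul[OF Kst_submod] by blast
      ultimately show "psc n q c r (smul d x) = smul d (psc n q c r x)" using True
        by (simp add: psc_def fun_eq_iff algebra_simps)
    qed
  next
    case False
    then show ?thesis unfolding linmap_def psc_def omega_stalk_ne[OF False] by (simp add: fun_eq_iff)
  qed
next
  fix r s and x :: "'k vec" assume a: "r \<in> Uq n q" "s \<in> Uq n q" "r \<subseteq> s" "x \<in> Kst q (card ({1..n} - q)) r"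
  show "psc n q c s x = omega_res n r s (psc n q c r x)"
  proof (cases "s = {1..n}")
    case False then show ?thesis by (simp add: psc_def omega_res_def kK_res_def)
  next
    case True
    show ?thesis
    proof (cases "r = {1..n}")
      case True then show ?thesis using \<open>s = {1..n}\<close> by (simp add: omega_res_def kK_res_def)
    next
      case False
      have "x = 0" by (rule Kst_top_zero[OF a(1) False a(4)])
      then show ?thesis using False \<open>s = {1..n}\<close> by (simp add: psc_def omega_res_def kK_res_def fun_eq_iff)
    qed
  qed
next
  fix r and x :: "'k vec" assume "r \<notin> Uq n q \<or> x \<notin> Kst q (card ({1..n} - q)) r"
  moreover have "{1..n} \<in> Uq n q" using hq Uq_iff by auto
  ultimately show "psc n q c r x = 0" by (auto simp: psc_def)
qed

lemma evA_Kst: "(ev ({1..n} - q) :: 'k::comm_ring_1 vec) \<in> Kst q (card ({1..n} - q)) {1..n}"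
  by (rule ev_Kst) (auto simp: IR_def)

lemma psc_val: "psc n q c {1..n} (ev ({1..n} - q)) 0 = (c :: 'k::comm_ring_1)"
  using evA_Kst[of n q, where 'k='k] by (simp add: psc_def ev_def)


definition shift :: "'a \<Rightarrow> (nat \<Rightarrow> 'a) \<Rightarrow> nat \<Rightarrow> 'a" where
  "shift F P j = (case j of 0 \<Rightarrow> F | Suc i \<Rightarrow> P i)"

lemma shift_simps[simp]: "shift F P 0 = F" "shift F P (Suc i) = P i"
  by (simp_all add: shift_def)

lemma res_exact:
  assumes pr: "proj_resolution Q F \<rho>F P \<rho> d \<epsilon>" and F: "is_sheaf Q F \<rho>F"
  shows "exact Q (shift F P) (shift \<rho>F \<rho>) (shift \<epsilon> d)" "projc Q (shift F P) (shift \<rho>F \<rho>)"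
proof -
  have PR1: "\<And>j. is_sheaf Q (P j) (\<rho> j)" "\<And>j. projective Q (P j) (\<rho> j)"
    and PR2: "\<And>j. sheaf_hom Q (P (Suc j)) (\<rho> (Suc j)) (P j) (\<rho> j) (d j)"
    and PR3: "sheaf_hom Q (P 0) (\<rho> 0) F \<rho>F \<epsilon>"
    and PR4: "\<forall>r\<in>Q. \<epsilon> r ` P 0 r = F r"
    and PR5: "\<forall>r\<in>Q. {x\<in>P 0 r. \<epsilon> r x = 0} = d 0 r ` P 1 r"
    and PR6: "\<And>j. \<forall>r\<in>Q. {x\<in>P (Suc j) r. d j r x = 0} = d (Suc j) r ` P (Suc (Suc j)) r"
    using pr unfolding proj_resolution_def by auto
  show "projc Q (shift F P) (shift \<rho>F \<rho>)" unfolding projc_def using PR1(2) by simp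
  show "exact Q (shift F P) (shift \<rho>F \<rho>) (shift \<epsilon> d)"
    unfolding exact_def cplx_def
  proof (intro conjI allI ballI impI)
    fix j show "is_sheaf Q (shift F P j) (shift \<rho>F \<rho> j)" using F PR1(1) by (cases j) simp_all
  next
    fix j show "sheaf_hom Q (shift F P (Suc j)) (shift \<rho>F \<rho> (Suc j)) (shift F P j) (shift \<rho>F \<rho> j) (shift \<epsilon> d j)"
      using PR2 PR3 by (cases j) simp_all
  next
    fix j r x assume r: "r \<in> Q" and x: "x \<in> shift F P (Suc (Suc j)) r"
    show "shift \<epsilon> d j r (shift \<epsilon> d (Suc j) r x) = 0"
    proof (cases j)
      case 0
      have "d 0 r x \<in> d 0 r ` P 1 r" using x 0 by simp
      then show ?thesis using PR5 r 0 by auto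
    next
      case (Suc i)
      have "d j r x \<in> d (Suc i) r ` P (Suc (Suc i)) r" using x Suc by simp
      then show ?thesis using PR6[of i] r Suc by auto
    qed
  next
    fix r assume "r \<in> Q" then show "shift \<epsilon> d 0 r ` shift F P 1 r = shift F P 0 r" using PR4 by simp
  next
    fix j r x assume r: "r \<in> Q" and x: "x \<in> shift F P (Suc j) r" and dx: "shift \<epsilon> d j r x = 0"
    show "x \<in> shift \<epsilon> d (Suc j) r ` shift F P (Suc (Suc j)) r"
    proof (cases j)
      case 0
      then have "x \<in> {x\<in>P 0 r. \<epsilon> r x = 0}" using x dx by simp
      then show ?thesis using PR5 r 0 by simp
    next
      case (Suc i)
      then have "x \<in> {x\<in>P (Suc i) r. d i r x = 0}" using x dx by simp
      then show ?thesis using PR6[of i] r Suc by simp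
    qed
  qed
qed

lemma cobd_eq:
  assumes psi: "sheaf_hom Q (P i) (\<rho> i) G \<rho>G \<psi>" and Pi: "is_sheaf Q (P i) (\<rho> i)"
    and d: "sheaf_hom Q (P (Suc i)) (\<rho> (Suc i)) (P i) (\<rho> i) (d i)"
  shows "cobd Q P d i \<psi> = (\<lambda>r x. \<psi> r (d i r x))"
proof (rule ext, rule ext)
  fix r x
  show "cobd Q P d i \<psi> r x = \<psi> r (d i r x)"
  proof (cases "r \<in> Q \<and> x \<in> P (Suc i) r")
    case True then show ?thesis by (simp add: cobd_def)
  next
    case False
    show ?thesis
    proof (cases "r \<in> Q")
      case False then show ?thesis using shD(3)[OF psi] by (simp add: cobd_def)
    next
      case True
      then have "x \<notin> P (Suc i) r" using \<open>\<not> (r \<in> Q \<and> x \<in> P (Suc i) r)\<close> by blast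
      then show ?thesis using shD(4)[OF d] sh_0[OF psi Pi] by (auto simp: cobd_def)
    qed
  qed
qed

lemma zero_shom: "(0 :: 'k::comm_ring_1 shom) = (\<lambda>r x. 0)"
  by (simp add: fun_eq_iff)

lemma cob_sub:
  assumes Z: "cplx Q (shift F P) (shift \<rho>F \<rho>) (shift \<epsilon> d)" and G: "is_sheaf Q G \<rho>G"
    and phi: "\<phi> \<in> coboundaries Q P \<rho> d G \<rho>G i"
  shows "\<phi> \<in> cocycles Q P \<rho> d G \<rho>G i"
proof (cases i)
  case 0
  then have p0: "\<phi> = 0" using phi by (simp add: coboundaries_def)
  have "sheaf_hom Q (P i) (\<rho> i) G \<rho>G (\<lambda>r x. 0)" by (rule sh_zero[OF G])
  moreover have "cobd Q P d i (\<lambda>r x. 0) = 0" by (simp add: cobd_def fun_eq_iff)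
  ultimately show ?thesis unfolding cocycles_def p0 zero_shom by simp
next
  case (Suc i')
  then obtain \<psi> where psi: "sheaf_hom Q (P i') (\<rho> i') G \<rho>G \<psi>" and pe: "\<phi> = cobd Q P d i' \<psi>"
    using phi by (auto simp: coboundaries_def)
  have Pi': "is_sheaf Q (P i') (\<rho> i')" using cplxD(1)[OF Z, of "Suc i'"] by simp
  have Pi: "is_sheaf Q (P i) (\<rho> i)" using cplxD(1)[OF Z, of "Suc i"] by simp
  have di': "sheaf_hom Q (P (Suc i')) (\<rho> (Suc i')) (P i') (\<rho> i') (d i')" using cplxD(2)[OF Z, of "Suc i'"] by simp
  have di: "sheaf_hom Q (P (Suc i)) (\<rho> (Suc i)) (P i) (\<rho> i) (d i)" using cplxD(2)[OF Z, of "Suc i"] by simp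
  have pe2: "\<phi> = (\<lambda>r x. \<psi> r (d i' r x))" using pe cobd_eq[where Q=Q and P=P and \<rho>=\<rho> and i=i' and d=d, OF psi Pi' di'] by simp
  have ph: "sheaf_hom Q (P i) (\<rho> i) G \<rho>G \<phi>" unfolding pe2 Suc by (rule sh_comp[OF di' psi Pi'])
  have phd: "sheaf_hom Q (P (Suc i)) (\<rho> (Suc i)) G \<rho>G (\<lambda>r x. \<phi> r (d i r x))" by (rule sh_comp[OF di ph Pi])
  have "cobd Q P d i \<phi> = 0"
  proof (rule ext, rule ext)
    fix r x
    show "cobd Q P d i \<phi> r x = 0 r x"
    proof (cases "r \<in> Q \<and> x \<in> P (Suc i) r")
      case True
      then have "d i' r (d i r x) = 0" using cplxD(3)[OF Z, of r x "Suc i'"] Suc by simp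
      then show ?thesis using True pe2 sh_0[OF psi Pi'] by (simp add: cobd_def)
    next
      case False then show ?thesis by (auto simp: cobd_def)
    qed
  qed
  then show ?thesis using ph by (simp add: cocycles_def)
qed

lemma cob_lemma:
  assumes Z: "cplx Q (shift F P) (shift \<rho>F \<rho>) (shift \<epsilon> d)" and G: "is_sheaf Q G \<rho>G"
    and beta: "sheaf_hom Q (W (Suc i)) (S (Suc i)) (P i) (\<rho> i) (\<beta> (Suc i))"
    and alpha: "sheaf_hom Q (P i) (\<rho> i) (W (Suc i)) (S (Suc i)) (\<alpha> (Suc i))"
    and hP: "\<And>j. sheaf_hom Q (shift F P j) (shift \<rho>F \<rho> j) (P j) (\<rho> j) (hP j)"
    and hP0: "\<And>r x. hP 0 r x = 0"
    and heq: "\<forall>r\<in>Q. \<forall>x\<in>P i r. x - \<beta> (Suc i) r (\<alpha> (Suc i) r x) = d i r (hP (Suc i) r x) + hP i r (shift \<epsilon> d i r x)"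
    and phi: "\<phi> \<in> cocycles Q P \<rho> d G \<rho>G i"
    and van: "\<forall>r\<in>Q. \<forall>y\<in>W (Suc i) r. \<phi> r (\<beta> (Suc i) r y) = 0"
  shows "\<phi> \<in> coboundaries Q P \<rho> d G \<rho>G i"
proof -
  have ph: "sheaf_hom Q (P i) (\<rho> i) G \<rho>G \<phi>" and cz: "cobd Q P d i \<phi> = 0"
    using phi by (auto simp: cocycles_def)
  have Pi: "is_sheaf Q (P i) (\<rho> i)" using cplxD(1)[OF Z, of "Suc i"] by simp
  have PSi: "is_sheaf Q (P (Suc i)) (\<rho> (Suc i))" using cplxD(1)[OF Z, of "Suc (Suc i)"] by simp
  have di: "sheaf_hom Q (P (Suc i)) (\<rho> (Suc i)) (P i) (\<rho> i) (d i)" using cplxD(2)[OF Z, of "Suc i"] by simp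
  have cz2: "\<phi> r (d i r y) = 0" if "r \<in> Q" "y \<in> P (Suc i) r" for r y
  proof -
    have "cobd Q P d i \<phi> r y = 0" using cz by simp
    then show ?thesis using that by (simp add: cobd_def)
  qed
  have key: "\<phi> r x = \<phi> r (hP i r (shift \<epsilon> d i r x))" if r: "r \<in> Q" and x: "x \<in> P i r" for r x
  proof -
    note l = shD(1)[OF ph r] and sm = is_sheafD(1)[OF Pi r]
    have m1: "\<beta> (Suc i) r (\<alpha> (Suc i) r x) \<in> P i r" using sh_in[OF beta r sh_in[OF alpha r x]] .
    have m2: "hP (Suc i) r x \<in> P (Suc i) r" using sh_in[OF hP[of "Suc i"] r] x by simp
    have m3: "d i r (hP (Suc i) r x) \<in> P i r" using sh_in[OF di r m2] .
    have m4: "shift \<epsilon> d i r x \<in> shift F P i r"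
      using sh_in[OF cplxD(2)[OF Z, of i] r] x by simp
    have m5: "hP i r (shift \<epsilon> d i r x) \<in> P i r" using sh_in[OF hP[of i] r m4] .
    have "\<phi> r (x - \<beta> (Suc i) r (\<alpha> (Suc i) r x)) = \<phi> r (d i r (hP (Suc i) r x) + hP i r (shift \<epsilon> d i r x))"
      using heq r x by simp
    then have "\<phi> r x - \<phi> r (\<beta> (Suc i) r (\<alpha> (Suc i) r x)) = \<phi> r (d i r (hP (Suc i) r x)) + \<phi> r (hP i r (shift \<epsilon> d i r x))"
      using linmap_diff[OF sm l x m1] linmap_add[OF l m3 m5] by simp
    moreover have "\<phi> r (\<beta> (Suc i) r (\<alpha> (Suc i) r x)) = 0" using van r sh_in[OF alpha r x] by blast
    moreover have "\<phi> r (d i r (hP (Suc i) r x)) = 0" using cz2[OF r m2] .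
    ultimately show ?thesis by simp
  qed
  show ?thesis
  proof (cases i)
    case 0
    have "\<phi> = 0"
    proof (rule ext, rule ext)
      fix r x show "\<phi> r x = 0 r x"
      proof (cases "r \<in> Q \<and> x \<in> P i r")
        case True
        then have "\<phi> r x = \<phi> r 0" using key hP0 0 by simp
        then show ?thesis using sh_0[OF ph Pi] by simp
      next
        case False then show ?thesis using shD(3,4)[OF ph] by auto
      qed
    qed
    then show ?thesis using 0 by (simp add: coboundaries_def)
  next
    case (Suc i')
    have hPi: "sheaf_hom Q (P i') (\<rho> i') (P i) (\<rho> i) (hP i)" using hP[of i] Suc by simp
    define \<psi> where "\<psi> r y = \<phi> r (hP i r y)" for r y
    have psi: "sheaf_hom Q (P i') (\<rho> i') G \<rho>G \<psi>" unfolding \<psi>_def[abs_def] by (rule sh_comp[OF hPi ph Pi])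
    have "\<phi> = cobd Q P d i' \<psi>"
    proof (rule ext, rule ext)
      fix r x show "\<phi> r x = cobd Q P d i' \<psi> r x"
      proof (cases "r \<in> Q \<and> x \<in> P i r")
        case True
        then show ?thesis using key[of r x] Suc by (simp add: cobd_def \<psi>_def)
      next
        case False then show ?thesis using shD(3,4)[OF ph] Suc by (auto simp: cobd_def)
      qed
    qed
    then show ?thesis using psi Suc by (auto simp: coboundaries_def)
  qed
qed

theorem corollary4p13:
  fixes n :: nat and K :: "nat set set" and q :: "nat set"
    and P :: "nat \<Rightarrow> nat set \<Rightarrow> 'k::comm_ring_1 vec set"
    and \<rho> :: "nat \<Rightarrow> nat set \<Rightarrow> nat set \<Rightarrow> 'k vec \<Rightarrow> 'k vec"
    and d :: "nat \<Rightarrow> nat set \<Rightarrow> 'k vec \<Rightarrow> 'k vec"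
    and \<epsilon> :: "nat set \<Rightarrow> 'k vec \<Rightarrow> 'k vec"
  assumes "noetherian_ring TYPE('k)"
    and "closed_AF1 n K"
    and "q \<in> K" and "\<forall>r\<in>K. q \<subseteq> r \<longrightarrow> r = q"
    and "proj_resolution (Uq n q) (kK_stalk K) (kK_res K) P \<rho> d \<epsilon>"
  shows "Ext_iso_k (Uq n q) P \<rho> d (omega_stalk n) (omega_res n) (dq n q)
     \<and> (\<forall>i. i \<noteq> dq n q \<longrightarrow> Ext_zero (Uq n q) P \<rho> d (omega_stalk n) (omega_res n) i)"
proof -
  have KA: "K \<subseteq> AF1 n" using assms(2) unfolding closed_AF1_def by (rule conjunct1)
  have "q \<in> AF1 n" using assms(3) KA by (rule subsetD[rotated])
  then have hq: "q \<subseteq> {1..n}" unfolding AF1_def by simp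
  have qQ: "q \<in> Uq n q" using hq by (simp add: Uq_iff)
  have tQ: "{1..n} \<in> Uq n q" using hq by (simp add: Uq_iff)
  have KQ: "\<forall>r\<in>Uq n q. r \<in> K \<longleftrightarrow> r = q"
  proof (intro ballI iffI)
    fix r assume r: "r \<in> Uq n q" and "r \<in> K"
    moreover have "q \<subseteq> r" using r unfolding Uq_iff by (rule conjunct2)
    ultimately show "r = q" using assms(4) by blast
  next
    fix r assume "r = q" then show "r \<in> K" using assms(3) by simp
  qed
  define m where "m = card ({1..n} - q)"
  have dqm: "dq n q = m" unfolding dq_def m_def using hq by (simp add: card_Diff_subset finite_subset)
  have kKsh: "is_sheaf (Uq n q) (kK_stalk K :: nat set \<Rightarrow> 'k vec set) (kK_res K)"
    by (rule kK_sheaf) (use KQ in blast)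
  have omsh: "is_sheaf (Uq n q) (omega_stalk n :: nat set \<Rightarrow> 'k vec set) (omega_res n)" by (rule omega_sheaf)
  define ZP where "ZP = shift (kK_stalk K) P"
  define RP where "RP = shift (kK_res K) \<rho>"
  define DP where "DP = shift \<epsilon> d"
  have ZPs: "ZP 0 = kK_stalk K" "\<And>j. ZP (Suc j) = P j" by (simp_all add: ZP_def)
  have RPs: "RP 0 = kK_res K" "\<And>j. RP (Suc j) = \<rho> j" by (simp_all add: RP_def)
  have DPs: "DP 0 = \<epsilon>" "\<And>j. DP (Suc j) = d j" by (simp_all add: DP_def)
  note rex = res_exact[OF assms(5) kKsh]
  have Pex: "exact (Uq n q) ZP RP DP" using rex(1) unfolding ZP_def RP_def DP_def .
  have Ppr: "projc (Uq n q) ZP RP" using rex(2) unfolding ZP_def RP_def .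
  have Pc: "cplx (Uq n q) ZP RP DP" using exactD(1)[OF Pex] .
  have Pc0: "cplx (Uq n q) (shift (kK_stalk K) P) (shift (kK_res K) \<rho>) (shift \<epsilon> d)"
    using Pc unfolding ZP_def RP_def DP_def .
  have Kex: "exact (Uq n q) (ZK K q) (RK K) (DK n q :: nat \<Rightarrow> 'k shom)" by (rule ZK_exact[OF qQ KQ])
  have Kc: "cplx (Uq n q) (ZK K q) (RK K) (DK n q :: nat \<Rightarrow> 'k shom)" using exactD(1)[OF Kex] .
  have Kpr: "projc (Uq n q) (ZK K q :: nat \<Rightarrow> nat set \<Rightarrow> 'k vec set) (RK K)"
    unfolding projc_def ZK_simps RK_simps by (intro allI) (rule Kst_proj[OF hq])
  define u0 where "u0 = (\<lambda>r (x::'k vec). if r \<in> Uq n q \<and> x \<in> kK_stalk K r then x else 0)"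
  have u0h: "sheaf_hom (Uq n q) (kK_stalk K) (kK_res K) (kK_stalk K) (kK_res K) u0"
    unfolding u0_def by (rule sh_id[OF kKsh])
  have u0P: "sheaf_hom (Uq n q) (ZP 0) (RP 0) (ZK K q 0) (RK K 0) u0" using u0h ZPs RPs by simp
  have u0K: "sheaf_hom (Uq n q) (ZK K q 0) (RK K 0) (ZP 0) (RP 0) u0" using u0h ZPs RPs by simp
  obtain \<alpha> where al: "chain_map (Uq n q) ZP RP DP (ZK K q) (RK K) (DK n q) \<alpha>" and al0: "\<alpha> 0 = u0"
    using lift_chain[OF Pc Ppr Kex u0P] by blast
  obtain \<beta> where be: "chain_map (Uq n q) (ZK K q) (RK K) (DK n q) ZP RP DP \<beta>" and be0: "\<beta> 0 = u0"
    using lift_chain[OF Kc Kpr Pex u0K] by blast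
  define idP where "idP = (\<lambda>j r x. if r \<in> Uq n q \<and> x \<in> ZP j r then x else 0)"
  define idK where "idK = (\<lambda>j r x. if r \<in> Uq n q \<and> x \<in> ZK K q j r then x else (0::'k vec))"
  have idPc: "chain_map (Uq n q) ZP RP DP ZP RP DP idP" unfolding idP_def by (rule chain_id[OF Pc])
  have idKc: "chain_map (Uq n q) (ZK K q) (RK K) (DK n q) (ZK K q) (RK K) (DK n q) idK"
    unfolding idK_def by (rule chain_id[OF Kc])
  have ba: "chain_map (Uq n q) ZP RP DP ZP RP DP (\<lambda>j r x. \<beta> j r (\<alpha> j r x))" by (rule chain_comp[OF al be Kc])
  have ab: "chain_map (Uq n q) (ZK K q) (RK K) (DK n q) (ZK K q) (RK K) (DK n q) (\<lambda>j r x. \<alpha> j r (\<beta> j r x))"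
    by (rule chain_comp[OF be al Pc])
  have agP: "\<forall>r\<in>Uq n q. \<forall>x\<in>ZP 0 r. idP 0 r x = \<beta> 0 r (\<alpha> 0 r x)"
    using al0 be0 ZPs by (simp add: idP_def u0_def)
  have agK: "\<forall>r\<in>Uq n q. \<forall>x\<in>ZK K q 0 r. idK 0 r x = \<alpha> 0 r (\<beta> 0 r x)"
    using al0 be0 by (simp add: idK_def u0_def)
  obtain hP where hPh: "\<forall>j. sheaf_hom (Uq n q) (ZP j) (RP j) (ZP (Suc j)) (RP (Suc j)) (hP j)"
    and hP0: "\<forall>r x. hP 0 r x = 0"
    and hPe: "\<forall>j. \<forall>r\<in>Uq n q. \<forall>x\<in>ZP (Suc j) r. idP (Suc j) r x - \<beta> (Suc j) r (\<alpha> (Suc j) r x) = DP (Suc j) r (hP (Suc j) r x) + hP j r (DP j r x)"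
    using homotopy[OF Pc Ppr Pex idPc ba agP] by (elim exE conjE) (rule that)
  obtain hK where hKh: "\<forall>j. sheaf_hom (Uq n q) (ZK K q j) (RK K j) (ZK K q (Suc j)) (RK K (Suc j)) (hK j)"
    and hK0: "\<forall>r x. hK 0 r x = 0"
    and hKe: "\<forall>j. \<forall>r\<in>Uq n q. \<forall>x\<in>ZK K q (Suc j) r. idK (Suc j) r x - \<alpha> (Suc j) r (\<beta> (Suc j) r x) = DK n q (Suc j) r (hK (Suc j) r x) + hK j r (DK n q j r x)"
    using homotopy[OF Kc Kpr Kex idKc ab agK] by (elim exE conjE) (rule that)
  have vanK: "\<psi> r x = 0" if "sheaf_hom (Uq n q) (Kst q j) (\<lambda>r s x. x) (omega_stalk n) (omega_res n) \<psi>" "j \<noteq> m"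
    for j and \<psi> :: "'k shom" and r x
    using homK_vanish[OF hq that(1)] that(2) m_def by blast
  have beS: "sheaf_hom (Uq n q) (Kst q i) (\<lambda>r s x. x) (P i) (\<rho> i) (\<beta> (Suc i))" for i
    using chainD(1)[OF be, of "Suc i"] ZPs RPs by simp
  have alS: "sheaf_hom (Uq n q) (P i) (\<rho> i) (Kst q i) (\<lambda>r s x. x) (\<alpha> (Suc i))" for i
    using chainD(1)[OF al, of "Suc i"] ZPs RPs by simp
  have Psh: "is_sheaf (Uq n q) (P i) (\<rho> i)" for i using cplxD(1)[OF Pc, of "Suc i"] ZPs RPs by simp
  have phibeta: "sheaf_hom (Uq n q) (Kst q i) (\<lambda>r s x. x) (omega_stalk n) (omega_res n) (\<lambda>r y. \<phi> r (\<beta> (Suc i) r y))"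
    if "\<phi> \<in> cocycles (Uq n q) P \<rho> d (omega_stalk n) (omega_res n) i" for \<phi> i
    using that by (intro sh_comp[OF beS _ Psh]) (simp add: cocycles_def)
  have cobl: "\<phi> \<in> coboundaries (Uq n q) P \<rho> d (omega_stalk n) (omega_res n) i"
    if phc: "\<phi> \<in> cocycles (Uq n q) P \<rho> d (omega_stalk n) (omega_res n) i"
      and van: "\<forall>r\<in>Uq n q. \<forall>y\<in>Kst q i r. \<phi> r (\<beta> (Suc i) r y) = 0" for \<phi> i
  proof (rule cob_lemma[OF Pc0 omsh _ _ _ _ _ phc])
    show "sheaf_hom (Uq n q) (ZK K q (Suc i)) (RK K (Suc i)) (P i) (\<rho> i) (\<beta> (Suc i))" using beS by simp
    show "sheaf_hom (Uq n q) (P i) (\<rho> i) (ZK K q (Suc i)) (RK K (Suc i)) (\<alpha> (Suc i))" using alS by simp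
    show "\<And>j. sheaf_hom (Uq n q) (shift (kK_stalk K) P j) (shift (kK_res K) \<rho> j) (P j) (\<rho> j) (hP j)"
      using hPh unfolding ZP_def RP_def by simp
    show "\<And>r x. hP 0 r x = 0" using hP0 by simp
    show "\<forall>r\<in>Uq n q. \<forall>x\<in>P i r. x - \<beta> (Suc i) r (\<alpha> (Suc i) r x) = d i r (hP (Suc i) r x) + hP i r (shift \<epsilon> d i r x)"
      using hPe ZPs DPs unfolding idP_def DP_def by simp
    show "\<forall>r\<in>Uq n q. \<forall>y\<in>ZK K q (Suc i) r. \<phi> r (\<beta> (Suc i) r y) = 0" using van by simp
  qed
  have cobsub: "\<phi> \<in> cocycles (Uq n q) P \<rho> d (omega_stalk n) (omega_res n) i"
    if "\<phi> \<in> coboundaries (Uq n q) P \<rho> d (omega_stalk n) (omega_res n) i" for \<phi> i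
    by (rule cob_sub[OF Pc0 omsh that])
  have partB: "Ext_zero (Uq n q) P \<rho> d (omega_stalk n) (omega_res n) i" if im: "i \<noteq> m" for i
    unfolding Ext_zero_def
  proof (intro equalityI subsetI)
    fix \<phi> assume ph: "\<phi> \<in> cocycles (Uq n q) P \<rho> d (omega_stalk n) (omega_res n) i"
    show "\<phi> \<in> coboundaries (Uq n q) P \<rho> d (omega_stalk n) (omega_res n) i"
      by (rule cobl[OF ph]) (use vanK[OF phibeta[OF ph] im] in blast)
  next
    fix \<phi> assume "\<phi> \<in> coboundaries (Uq n q) P \<rho> d (omega_stalk n) (omega_res n) i"
    then show "\<phi> \<in> cocycles (Uq n q) P \<rho> d (omega_stalk n) (omega_res n) i" by (rule cobsub)
  qed
  have partA: "Ext_iso_k (Uq n q) P \<rho> d (omega_stalk n) (omega_res n) m"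
  proof -
    define t where "t = {1..n::nat}"
    define e where "e = (ev ({1..n} - q) :: 'k vec)"
    have eK: "e \<in> Kst q m t" unfolding e_def m_def t_def by (rule evA_Kst)
    have tQ': "t \<in> Uq n q" using tQ by (simp add: t_def)
    define f where "f \<phi> = \<phi> t (\<beta> (Suc m) t e) 0" for \<phi> :: "'k shom"
    let ?coc = "cocycles (Uq n q) P \<rho> d (omega_stalk n) (omega_res n) m"
    let ?cob = "coboundaries (Uq n q) P \<rho> d (omega_stalk n) (omega_res n) m"
    have psch: "sheaf_hom (Uq n q) (Kst q m) (\<lambda>r s x. x) (omega_stalk n) (omega_res n) (psc n q c :: 'k shom)" for c
      unfolding m_def by (rule psc_hom[OF hq])
    have psd_van: "psc n q c r (dK n q m r y) = (0 :: 'k vec)" for c r y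
    proof -
      have "sheaf_hom (Uq n q) (Kst q (Suc m)) (\<lambda>r s x. x) (omega_stalk n) (omega_res n) (\<lambda>r y. psc n q c r (dK n q m r y) :: 'k vec)"
        by (rule sh_comp[OF dK_hom psch Kst_sheaf])
      from vanK[OF this, of r y] show ?thesis by simp
    qed
    have surj: "c \<in> f ` ?coc" for c
    proof -
      define \<phi>c where "\<phi>c = (\<lambda>r x. psc n q c r (\<alpha> (Suc m) r x))"
      have phh: "sheaf_hom (Uq n q) (P m) (\<rho> m) (omega_stalk n) (omega_res n) \<phi>c"
        unfolding \<phi>c_def by (rule sh_comp[OF alS psch Kst_sheaf])
      have "cobd (Uq n q) P d m \<phi>c = 0"
      proof (rule ext, rule ext)
        fix r x show "cobd (Uq n q) P d m \<phi>c r x = 0 r x"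
        proof (cases "r \<in> Uq n q \<and> x \<in> P (Suc m) r")
          case True
          then have r: "r \<in> Uq n q" and x: "x \<in> ZP (Suc (Suc m)) r" using ZPs by auto
          have "DK n q (Suc m) r (\<alpha> (Suc (Suc m)) r x) = \<alpha> (Suc m) r (DP (Suc m) r x)"
            by (rule chainD(2)[OF al r x])
          then have "\<alpha> (Suc m) r (d m r x) = dK n q m r (\<alpha> (Suc (Suc m)) r x)" using DPs by simp
          then show ?thesis using True psd_van by (simp add: cobd_def \<phi>c_def)
        next
          case False then show ?thesis by (auto simp: cobd_def)
        qed
      qed
      then have inc: "\<phi>c \<in> ?coc" using phh by (simp add: cocycles_def)
      have eZ: "e \<in> ZK K q (Suc m) t" using eK by simp
      have heq: "idK (Suc m) t e - \<alpha> (Suc m) t (\<beta> (Suc m) t e) = DK n q (Suc m) t (hK (Suc m) t e) + hK m t (DK n q m t e)"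
        using hKe tQ' eZ by blast
      have l: "linmap (Kst q m t) (omega_stalk n t) (psc n q c t)" using shD(1)[OF psch tQ'] .
      have m1: "\<alpha> (Suc m) t (\<beta> (Suc m) t e) \<in> Kst q m t"
        using sh_in[OF alS tQ' sh_in[OF beS tQ' eK]] .
      have hKS: "hK (Suc m) t e \<in> Kst q (Suc m) t" using sh_in[OF hKh[rule_format, of "Suc m"] tQ' eZ] by simp
      have m2: "DK n q (Suc m) t (hK (Suc m) t e) \<in> Kst q m t" using sh_in[OF dK_hom tQ' hKS] by simp
      have DKe: "DK n q m t e \<in> ZK K q m t" using sh_in[OF cplxD(2)[OF Kc, of m] tQ'] eZ by simp
      have m3: "hK m t (DK n q m t e) \<in> Kst q m t" using sh_in[OF hKh[rule_format, of m] tQ' DKe] by simp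
      have "psc n q c t (e - \<alpha> (Suc m) t (\<beta> (Suc m) t e)) = psc n q c t (DK n q (Suc m) t (hK (Suc m) t e) + hK m t (DK n q m t e))"
        using heq eK tQ' by (simp add: idK_def)
      then have "psc n q c t e - psc n q c t (\<alpha> (Suc m) t (\<beta> (Suc m) t e)) = psc n q c t (DK n q (Suc m) t (hK (Suc m) t e)) + psc n q c t (hK m t (DK n q m t e))"
        using linmap_diff[OF Kst_submod l eK m1] linmap_add[OF l m2 m3] by simp
      moreover have "psc n q c t (DK n q (Suc m) t (hK (Suc m) t e)) = 0" using psd_van by simp
      moreover have "psc n q c t (hK m t (DK n q m t e)) = 0"
      proof (cases m)
        case 0
        then show ?thesis using hK0 sh_0[OF psch Kst_sheaf] by simp
      next
        case (Suc m')
        have "sheaf_hom (Uq n q) (Kst q m') (\<lambda>r s x. x) (Kst q m) (\<lambda>r s x. x) (hK m)"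
          using hKh[rule_format, of m] Suc by simp
        then have "sheaf_hom (Uq n q) (Kst q m') (\<lambda>r s x. x) (omega_stalk n) (omega_res n) (\<lambda>r y. psc n q c r (hK m r y) :: 'k vec)"
          by (rule sh_comp[OF _ psch Kst_sheaf])
        from vanK[OF this, of t "DK n q m t e"] show ?thesis using Suc by simp
      qed
      ultimately have "psc n q c t (\<alpha> (Suc m) t (\<beta> (Suc m) t e)) = psc n q c t e" by simp
      then have "f \<phi>c = c" unfolding f_def \<phi>c_def using psc_val[of n q c] by (simp add: t_def e_def)
      then show ?thesis using inc by (metis image_eqI)
    qed
    have kerA: "\<phi> \<in> ?cob" if "\<phi> \<in> ?coc" "f \<phi> = 0" for \<phi>
    proof (rule cobl[OF that(1)])
      define \<psi> where "\<psi> r y = \<phi> r (\<beta> (Suc m) r y)" for r y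
      have psh: "sheaf_hom (Uq n q) (Kst q m) (\<lambda>r s x. x) (omega_stalk n) (omega_res n) \<psi>"
        unfolding \<psi>_def[abs_def] by (rule phibeta[OF that(1)])
      have "\<psi> t e \<in> omega_stalk n t" using sh_in[OF psh tQ' eK] .
      then have "\<psi> t e \<in> kline" unfolding t_def omega_stalk_top .
      moreover have "\<psi> t e 0 = 0" using that(2) by (simp add: f_def \<psi>_def)
      ultimately have z: "\<psi> t e = 0"
      proof (intro ext)
        fix N assume k: "\<psi> t e \<in> kline" and z0: "\<psi> t e 0 = 0"
        show "\<psi> t e N = 0 N"
        proof (cases "N = 0")
          case True then show ?thesis using z0 by simp
        next
          case False then show ?thesis using k unfolding kline_def by simp
        qed
      qed
      have "\<psi> r y = 0" for r y
        by (rule homK_vanish[OF hq psh]) (use z in \<open>simp add: t_def e_def\<close>)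
      then show "\<forall>r\<in>Uq n q. \<forall>y\<in>Kst q m r. \<phi> r (\<beta> (Suc m) r y) = 0" by (simp add: \<psi>_def)
    qed
    have cobA: "f \<phi> = 0" if phc: "\<phi> \<in> ?cob" for \<phi>
    proof (cases m)
      case 0
      then have "\<phi> = 0" using phc by (simp add: coboundaries_def)
      then show ?thesis by (simp add: f_def)
    next
      case (Suc m')
      then obtain \<psi> where psi: "sheaf_hom (Uq n q) (P m') (\<rho> m') (omega_stalk n) (omega_res n) \<psi>"
        and pe: "\<phi> = cobd (Uq n q) P d m' \<psi>" using phc Suc by (auto simp: coboundaries_def)
      have bt: "\<beta> (Suc m) t e \<in> P (Suc m') t" using sh_in[OF beS tQ' eK] Suc by simp
      have eZ: "e \<in> ZK K q (Suc m) t" using eK by simp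
      have "DP m t (\<beta> (Suc m) t e) = \<beta> m t (DK n q m t e)" by (rule chainD(2)[OF be tQ' eZ])
      then have dbe: "d m' t (\<beta> (Suc m) t e) = \<beta> (Suc m') t (DK n q (Suc m') t e)" using Suc DPs by simp
      have sh2: "sheaf_hom (Uq n q) (Kst q m') (\<lambda>r s x. x) (omega_stalk n) (omega_res n) (\<lambda>r y. \<psi> r (\<beta> (Suc m') r y))"
        by (rule sh_comp[OF beS psi Psh])
      have "\<psi> t (\<beta> (Suc m') t y) = 0" for y using vanK[OF sh2, of t y] Suc by simp
      then show ?thesis unfolding f_def pe using tQ' bt dbe by (simp add: cobd_def)
    qed
    show ?thesis
      unfolding Ext_iso_k_def
    proof (intro exI[of _ f] conjI ballI allI)
      fix \<phi> \<psi> show "f (\<phi> + \<psi>) = f \<phi> + f \<psi>" by (simp add: f_def)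
    next
      fix c \<phi> show "f (hsmul c \<phi>) = c * f \<phi>" by (simp add: f_def hsmul_def)
    next
      show "f ` ?coc = UNIV" using surj by blast
    next
      show "{\<phi> \<in> ?coc. f \<phi> = 0} = ?cob" using kerA cobA cobsub by blast
    qed
  qed
  show ?thesis using partA partB dqm by simp
qed


end
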